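(* Let $n\ge1$ and let $U\in\mathcal{C}_2^{(n)}$ be a Clifford unitary such that for some integer $t\ge 0$, $U^{2^t}$ is a scalar multiple of an element of $\mathcal{P}_n$. Then the projective Pauli periodicity $m$ of $U$ satisfies $$m\le\lceil\log_2(2n)\rceil.$$ Moreover, this bound is tight: for every $n>1$ there exists a Clifford unitary $U\in\mathcal{C}_2^{(n)}$ whose projective Pauli periodicity is exactly $\lceil\log_2(2n)\rceil$; multiplying it by a suitable global phase, one may moreover take $U^{2^{\lceil\log_2(2n)\rceil}}\in\mathcal{P}_n$, so that its Pauli periodicity is also exactly $\lceil\log_2(2n)\rceil$.
   Context: The $n$-qubit Pauli group is $\mathcal{P}_n=\{\omega P_1\otimes\cdots\otimes P_n:\ \omega\in\{\pm1,\pm \mathrm{i}\},\ P_j\in\{I,X,Y,Z\}\}$. The Clifford group is $\mathcal{C}_2^{(n)}=\{U\in U(2^n):\ UPU^\dagger\in\mathcal{P}_n\ \forall P\in\mathcal{P}_n\}$. The Pauli periodicity of $U$ is $\min\{t\ge 0:\ U^{2^t}\in\mathcal{P}_n\}$ (exact membership). The projective Pauli periodicity of $U$ is $\min\{t\ge0:\ U^{2^t}=cP\text{ for some }c\in\mathbb{C},|c|=1,P\in\mathcal{P}_n\}$. *)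

theory Defs
  imports Complex_Main "Jordan_Normal_Form.Matrix"
begin

text \<open>Single-qubit Pauli matrices, indexed 0 = I, 1 = X, 2 = Y, 3 = Z.\<close>
definition pauli1 :: "nat \<Rightarrow> complex mat" where
  "pauli1 a = (if a = 0 then mat_of_rows_list 2 [[1, 0], [0, 1]]
               else if a = 1 then mat_of_rows_list 2 [[0, 1], [1, 0]]
               else if a = 2 then mat_of_rows_list 2 [[0, -\<i>], [\<i>, 0]]
               else mat_of_rows_list 2 [[1, 0], [0, -1]])"

text \<open>The n-fold tensor product P_{p 0} (x) ... (x) P_{p (n-1)}, a 2^n x 2^n matrix;
  the basis index i corresponds to the bit string (i div 2^k mod 2)_{k<n}.\<close>
definition pauli_string :: "nat \<Rightarrow> (nat \<Rightarrow> nat) \<Rightarrow> complex mat" where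
  "pauli_string n p = mat (2^n) (2^n)
     (\<lambda>(i, j). \<Prod>k<n. pauli1 (p k) $$ (i div 2^k mod 2, j div 2^k mod 2))"

definition pauli_group :: "nat \<Rightarrow> complex mat set" where
  "pauli_group n = {\<omega> \<cdot>\<^sub>m pauli_string n p | \<omega> p.
       \<omega> \<in> {1, -1, \<i>, -\<i>} \<and> (\<forall>k<n. p k < 4)}"

definition adjoint_mat :: "complex mat \<Rightarrow> complex mat" where
  "adjoint_mat A = mat (dim_col A) (dim_row A) (\<lambda>(i, j). cnj (A $$ (j, i)))"

definition unitary_mat :: "nat \<Rightarrow> complex mat \<Rightarrow> bool" where
  "unitary_mat d U \<longleftrightarrow> U \<in> carrier_mat d d \<and> U * adjoint_mat U = 1\<^sub>m d"

definition clifford_group :: "nat \<Rightarrow> complex mat set" where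
  "clifford_group n = {U. unitary_mat (2^n) U \<and>
       (\<forall>P \<in> pauli_group n. U * P * adjoint_mat U \<in> pauli_group n)}"

definition proj_pauli :: "nat \<Rightarrow> complex mat \<Rightarrow> bool" where
  "proj_pauli n A \<longleftrightarrow> (\<exists>c P. cmod c = 1 \<and> P \<in> pauli_group n \<and> A = c \<cdot>\<^sub>m P)"

definition pauli_periodicity :: "nat \<Rightarrow> complex mat \<Rightarrow> nat" where
  "pauli_periodicity n U = (LEAST t. U ^\<^sub>m (2^t) \<in> pauli_group n)"

definition proj_pauli_periodicity :: "nat \<Rightarrow> complex mat \<Rightarrow> nat" where
  "proj_pauli_periodicity n U = (LEAST t. proj_pauli n (U ^\<^sub>m (2^t)))"

end

theory Submission
  imports Defs "Jordan_Normal_Form.Determinant"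
begin

unbundle bit_operations_syntax



lemma bit_lt_pow: "(x::nat) < 2^n \<Longrightarrow> bit x k \<Longrightarrow> k < n"
proof (rule ccontr)
  assume "x < 2^n" "bit x k" "\<not> k < n"
  then have "2^n \<le> (2::nat)^k" by simp
  with \<open>x < 2^n\<close> have "x div 2^k = 0" by (metis div_less less_le_trans)
  with \<open>bit x k\<close> show False by (simp add: bit_iff_odd)
qed

lemma nat_eq_bits: "(x::nat) < 2^n \<Longrightarrow> y < 2^n \<Longrightarrow> (\<forall>k<n. bit x k = bit y k) \<Longrightarrow> x = y"
  by (rule bit_eqI) (metis bit_lt_pow)

lemma xor_lt_pow: "(x::nat) < 2^n \<Longrightarrow> y < 2^n \<Longrightarrow> x XOR y < 2^n"
proof -
  assume a: "x < 2^n" "y < 2^n"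
  have "take_bit n (x XOR y) = x XOR y"
    by (rule bit_eqI) (auto simp: bit_simps dest: bit_lt_pow[OF a(1)] bit_lt_pow[OF a(2)])
  then show ?thesis by (metis take_bit_nat_less_exp)
qed

lemma pow_lt_pow: "k < n \<Longrightarrow> (2::nat)^k < 2^n" by simp

lemma xor_pow_less: "bit (y::nat) k \<Longrightarrow> y XOR 2^k < y"
proof -
  assume b: "bit y k"
  have "y = (y XOR 2^k) + 2^k"
  proof -
    have "(y XOR 2^k) + 2^k = (y XOR 2^k) OR 2^k"
      using b by (intro disjunctive_add_eq_or bit_eqI) (auto simp: bit_simps)
    also have "\<dots> = y" using b by (auto intro!: bit_eqI simp: bit_simps)
    finally show ?thesis by simp
  qed
  then show ?thesis by (metis less_add_same_cancel1 zero_less_numeral zero_less_power)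
qed

definition sg :: "bool \<Rightarrow> complex" where "sg b = (if b then -1 else 1)"

lemma sg_xor: "sg (a \<noteq> b) = sg a * sg b" by (auto simp: sg_def)
lemma sg_sq[simp]: "sg a * sg a = 1" by (auto simp: sg_def)
lemma sg_nz[simp]: "sg a \<noteq> 0" by (auto simp: sg_def)
lemma cnj_sg[simp]: "cnj (sg a) = sg a" by (auto simp: sg_def)
lemma sg_False[simp]: "sg False = 1" by (simp add: sg_def)

definition chi :: "nat \<Rightarrow> nat \<Rightarrow> nat \<Rightarrow> complex" where
  "chi n c y = (\<Prod>k<n. sg (bit c k \<and> bit y k))"

lemma chi_xor_right: "chi n c (y XOR z) = chi n c y * chi n c z"
  unfolding chi_def prod.distrib[symmetric]
  by (rule prod.cong) (auto simp: bit_simps sg_def)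

lemma chi_xor_left: "chi n (c XOR d) y = chi n c y * chi n d y"
  unfolding chi_def prod.distrib[symmetric]
  by (rule prod.cong) (auto simp: bit_simps sg_def)

lemma chi_0_right[simp]: "chi n c 0 = 1" by (simp add: chi_def)
lemma chi_0_left[simp]: "chi n 0 y = 1" by (simp add: chi_def)
lemma chi_sq[simp]: "chi n c y * chi n c y = 1"
  unfolding chi_def prod.distrib[symmetric] by simp
lemma chi_nz[simp]: "chi n c y \<noteq> 0" by (metis chi_sq mult_zero_left zero_neq_one)
lemma cnj_chi[simp]: "cnj (chi n c y) = chi n c y"
  unfolding chi_def by (induct n) auto
lemma chi_comm: "chi n c y = chi n y c" unfolding chi_def by (simp add: conj_commute)
lemma chi_pm: "chi n c y = 1 \<or> chi n c y = -1"
  unfolding chi_def by (induct n) (auto simp: sg_def)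

lemma chi_pow: "k < n \<Longrightarrow> chi n c (2^k) = sg (bit c k)"
proof -
  assume k: "k < n"
  have "chi n c (2^k) = (\<Prod>l<n. if l = k then sg (bit c k) else 1)"
    unfolding chi_def by (rule prod.cong) (auto simp: bit_simps)
  also have "\<dots> = sg (bit c k)" using k by (simp add: prod.delta)
  finally show ?thesis .
qed

definition of_bits :: "nat \<Rightarrow> (nat \<Rightarrow> bool) \<Rightarrow> nat" where
  "of_bits n f = (\<Sum>k<n. of_bool (f k) * 2^k)"

lemma of_bits_Suc: "of_bits (Suc n) f = of_bits n f OR (of_bool (f n) * 2^n)"
proof -
  have lt: "of_bits n f < 2^n"
  proof (induct n)
    case (Suc n) then show ?case by (simp add: of_bits_def)
  qed (simp add: of_bits_def)
  have "of_bits (Suc n) f = of_bits n f + of_bool (f n) * 2^n" by (simp add: of_bits_def)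
  also have "\<dots> = of_bits n f OR (of_bool (f n) * 2^n)"
    by (rule disjunctive_add_eq_or, rule bit_eqI) (auto simp: bit_simps dest: bit_lt_pow[OF lt])
  finally show ?thesis .
qed

lemma bit_of_bits: "bit (of_bits n f) k \<longleftrightarrow> k < n \<and> f k"
proof (induct n)
  case 0 then show ?case by (simp add: of_bits_def)
next
  case (Suc n) then show ?case
    by (auto simp: of_bits_Suc bit_simps less_Suc_eq)
qed

lemma of_bits_lt: "of_bits n f < 2^n"
proof -
  have "take_bit n (of_bits n f) = of_bits n f"
    by (rule bit_eqI) (auto simp: bit_simps bit_of_bits)
  then show ?thesis by (metis take_bit_nat_less_exp)
qed

lemma char_rep:
  fixes g :: "nat \<Rightarrow> complex"
  assumes step: "\<And>y k. y < 2^n \<Longrightarrow> k < n \<Longrightarrow> g (y XOR 2^k) = s k * g y"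
    and pm: "\<And>k. k < n \<Longrightarrow> s k = 1 \<or> s k = -1"
  shows "y < 2^n \<Longrightarrow> g y = g 0 * chi n (of_bits n (\<lambda>k. s k = -1)) y"
proof (induct y rule: less_induct)
  case (less y)
  show ?case
  proof (cases "y = 0")
    case True then show ?thesis by simp
  next
    case False
    have "\<exists>k. bit y k"
    proof (rule ccontr)
      assume "\<not> (\<exists>k. bit y k)"
      then have "y = 0" by (intro bit_eqI) auto
      with False show False by simp
    qed
    then obtain k where bk: "bit y k" by blast
    have kn: "k < n" using bit_lt_pow[OF less.prems bk] .
    let ?y = "y XOR 2^k"
    have yl: "?y < y" using xor_pow_less[OF bk] .
    have yn: "?y < 2^n" using yl less.prems by simp
    have yy: "?y XOR 2^k = y" by (simp add: xor.assoc)
    have "g y = s k * g ?y" using step[OF yn kn] yy by simp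
    also have "g ?y = g 0 * chi n (of_bits n (\<lambda>k. s k = -1)) ?y" using less.hyps[OF yl yn] .
    finally have "g y = s k * (g 0 * chi n (of_bits n (\<lambda>k. s k = -1)) ?y)" .
    moreover have "chi n (of_bits n (\<lambda>k. s k = -1)) y = chi n (of_bits n (\<lambda>k. s k = -1)) ?y * s k"
    proof -
      have "chi n (of_bits n (\<lambda>k. s k = -1)) y = chi n (of_bits n (\<lambda>k. s k = -1)) (?y XOR 2^k)"
        using yy by simp
      also have "\<dots> = chi n (of_bits n (\<lambda>k. s k = -1)) ?y * chi n (of_bits n (\<lambda>k. s k = -1)) (2^k)"
        by (rule chi_xor_right)
      also have "chi n (of_bits n (\<lambda>k. s k = -1)) (2^k) = s k"
        using pm[OF kn] kn by (auto simp: chi_pow bit_of_bits sg_def)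
      finally show ?thesis .
    qed
    ultimately show ?thesis by simp
  qed
qed



lemma mat_mult_entry:
  "A \<in> carrier_mat r m \<Longrightarrow> B \<in> carrier_mat m c \<Longrightarrow> i < r \<Longrightarrow> j < c \<Longrightarrow>
   (A * B) $$ (i,j) = (\<Sum>l<m. A $$ (i,l) * B $$ (l,j))"
  by (simp add: scalar_prod_def lessThan_atLeast0)

lemma sum_collapse_right:
  "(\<Sum>l<(N::nat). f l * (if l = p then c else 0)) = (if p < N then f p * c else (0::complex))"
proof -
  have "(\<Sum>l<N. f l * (if l = p then c else 0)) = (\<Sum>l<N. if l = p then f p * c else 0)"
    by (rule sum.cong) auto
  also have "\<dots> = (if p < N then f p * c else 0)" by (subst sum.delta) auto
  finally show ?thesis .
qed

lemma sum_collapse_left: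
  "(\<Sum>l<(N::nat). (if l = p then c else 0) * f l) = (if p < N then c * f p else (0::complex))"
proof -
  have "(\<Sum>l<N. (if l = p then c else 0) * f l) = (\<Sum>l<N. if l = p then c * f p else 0)"
    by (rule sum.cong) auto
  also have "\<dots> = (if p < N then c * f p else 0)" by (subst sum.delta) auto
  finally show ?thesis .
qed

lemma index_adjoint[simp]:
  "i < dim_col A \<Longrightarrow> j < dim_row A \<Longrightarrow> adjoint_mat A $$ (i,j) = cnj (A $$ (j,i))"
  unfolding adjoint_mat_def by (rule trans[OF index_mat(1)]) auto
lemma index_adjoint2[simp]: "dim_row (adjoint_mat A) = dim_col A" "dim_col (adjoint_mat A) = dim_row A"
  unfolding adjoint_mat_def by auto

lemma adjoint_carrier[simp]: "A \<in> carrier_mat r c \<Longrightarrow> adjoint_mat A \<in> carrier_mat c r"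
  by (rule carrier_matI) auto

lemma adjoint_mult:
  assumes "A \<in> carrier_mat r m" "B \<in> carrier_mat m c"
  shows "adjoint_mat (A * B) = adjoint_mat B * adjoint_mat A"
proof (rule eq_matI)
  fix i j assume "i < dim_row (adjoint_mat B * adjoint_mat A)" "j < dim_col (adjoint_mat B * adjoint_mat A)"
  then have i: "i < c" and j: "j < r" using assms by auto
  have "adjoint_mat (A * B) $$ (i,j) = cnj ((A * B) $$ (j,i))" using i j assms by simp
  also have "\<dots> = cnj (\<Sum>l<m. A $$ (j,l) * B $$ (l,i))" by (simp only: mat_mult_entry[OF assms j i])
  also have "\<dots> = (\<Sum>l<m. adjoint_mat B $$ (i,l) * adjoint_mat A $$ (l,j))"
    using i j assms by (auto intro!: sum.cong simp: mult.commute)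
  also have "\<dots> = (adjoint_mat B * adjoint_mat A) $$ (i,j)"
    using i j assms by (subst mat_mult_entry[of _ c m _ r]) auto
  finally show "adjoint_mat (A * B) $$ (i,j) = (adjoint_mat B * adjoint_mat A) $$ (i,j)" .
qed (use assms in auto)

lemma adjoint_smult: "adjoint_mat (x \<cdot>\<^sub>m A) = cnj x \<cdot>\<^sub>m adjoint_mat A"
  by (intro eq_matI) auto

lemma adjoint_one[simp]: "adjoint_mat (1\<^sub>m n) = 1\<^sub>m n"
  by (intro eq_matI) auto

lemma unitary_left:
  assumes "U \<in> carrier_mat d d" "U * adjoint_mat U = 1\<^sub>m d"
  shows "adjoint_mat U * U = 1\<^sub>m d"
  using mat_mult_left_right_inverse[OF assms(1) _ assms(2)] assms(1) by auto

lemma xor_cancel[simp]: "((x::nat) XOR a) XOR a = x" by (simp add: xor.assoc)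
lemma xor_swap_eq: "(j::nat) = i XOR a \<longleftrightarrow> i = j XOR a" by (metis xor_cancel)

definition XZ :: "nat \<Rightarrow> nat \<Rightarrow> nat \<Rightarrow> complex mat" where
  "XZ n a b = mat (2^n) (2^n) (\<lambda>(i,j). if i = j XOR a then chi n b j else 0)"

lemma XZ_carrier[simp]: "XZ n a b \<in> carrier_mat (2^n) (2^n)"
  and XZ_dim[simp]: "dim_row (XZ n a b) = 2^n" "dim_col (XZ n a b) = 2^n"
  by (auto simp: XZ_def)

lemma XZ_index: "i < 2^n \<Longrightarrow> j < 2^n \<Longrightarrow> XZ n a b $$ (i,j) = (if i = j XOR a then chi n b j else 0)"
  by (simp add: XZ_def)

lemma XZ_index': "i < 2^n \<Longrightarrow> j < 2^n \<Longrightarrow> XZ n a b $$ (i,j) = (if j = i XOR a then chi n b j else 0)"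
  by (auto simp add: XZ_def xor.assoc)

lemma XZ_mult:
  assumes "a < 2^n" "a' < 2^n"
  shows "XZ n a b * XZ n a' b' = chi n b a' \<cdot>\<^sub>m XZ n (a XOR a') (b XOR b')"
proof (rule eq_matI)
  fix i j assume ij: "i < dim_row (chi n b a' \<cdot>\<^sub>m XZ n (a XOR a') (b XOR b'))"
    "j < dim_col (chi n b a' \<cdot>\<^sub>m XZ n (a XOR a') (b XOR b'))"
  then have i: "i < 2^n" and j: "j < 2^n" by auto
  have ja: "j XOR a' < 2^n" using xor_lt_pow[OF j assms(2)] .
  have "(XZ n a b * XZ n a' b') $$ (i,j) = (\<Sum>l<2^n. XZ n a b $$ (i,l) * XZ n a' b' $$ (l,j))"
    using i j by (intro mat_mult_entry) auto
  also have "\<dots> = (\<Sum>l<2^n. XZ n a b $$ (i,l) * (if l = j XOR a' then chi n b' j else 0))"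
    by (intro sum.cong refl) (simp add: XZ_index i j)
  also have "\<dots> = XZ n a b $$ (i, j XOR a') * chi n b' j"
    using ja by (simp add: sum_collapse_right)
  also have "\<dots> = (chi n b a' \<cdot>\<^sub>m XZ n (a XOR a') (b XOR b')) $$ (i,j)"
  proof -
    have x: "(j XOR a') XOR a = j XOR (a XOR a')" by (metis xor.assoc xor.commute)
    have c: "chi n b (j XOR a') * chi n b' j = chi n b a' * chi n (b XOR b') j"
      by (simp add: chi_xor_right chi_xor_left mult_ac)
    show ?thesis using i j ja by (simp add: XZ_index x c)
  qed
  finally show "(XZ n a b * XZ n a' b') $$ (i,j) = (chi n b a' \<cdot>\<^sub>m XZ n (a XOR a') (b XOR b')) $$ (i,j)" .
qed auto

lemma XZ_adj:
  assumes "a < 2^n"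
  shows "adjoint_mat (XZ n a b) = chi n b a \<cdot>\<^sub>m XZ n a b"
proof (rule eq_matI)
  fix i j assume "i < dim_row (chi n b a \<cdot>\<^sub>m XZ n a b)" "j < dim_col (chi n b a \<cdot>\<^sub>m XZ n a b)"
  then have i: "i < 2^n" and j: "j < 2^n" by auto
  show "adjoint_mat (XZ n a b) $$ (i,j) = (chi n b a \<cdot>\<^sub>m XZ n a b) $$ (i,j)"
    using i j by (auto simp add: XZ_index xor_swap_eq chi_xor_right mult_ac)
qed auto

lemma XZ_00: "XZ n 0 0 = 1\<^sub>m (2^n)"
  by (intro eq_matI) (auto simp: XZ_index)

lemma XZ_unitary:
  assumes "a < 2^n"
  shows "XZ n a b * adjoint_mat (XZ n a b) = 1\<^sub>m (2^n)"
  using assms by (simp add: XZ_adj mult_smult_distrib[of _ "2^n" "2^n" _ "2^n"] XZ_mult XZ_00) (intro eq_matI, auto)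

lemma XZ_inj:
  assumes "a < 2^n" "b < 2^n" "a' < 2^n" "b' < 2^n" "w \<noteq> 0"
    and eq: "w \<cdot>\<^sub>m XZ n a b = w' \<cdot>\<^sub>m XZ n a' b'"
  shows "a = a' \<and> b = b' \<and> w = w'"
proof -
  have e: "w * XZ n a b $$ (i,j) = w' * XZ n a' b' $$ (i,j)" if "i < 2^n" "j < 2^n" for i j
    using arg_cong[OF eq, of "\<lambda>M. M $$ (i,j)"] that by simp
  from e[of a 0] assms have "w = w' * (if a = a' then 1 else 0)" by (simp add: XZ_index)
  with assms have aa: "a = a'" and ww: "w = w'" by (auto split: if_splits)
  have "bit b k = bit b' k" if k: "k < n" for k
  proof -
    have kk: "(2::nat)^k < 2^n" using k by simp
    have x: "2^k XOR a < 2^n" using xor_lt_pow[OF kk assms(1)] .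
    from e[OF x kk] aa ww assms x kk have "chi n b (2^k) = chi n b' (2^k)" by (simp add: XZ_index)
    with k show ?thesis by (cases "bit b k"; cases "bit b' k") (auto simp: chi_pow sg_def)
  qed
  then have "b = b'" using nat_eq_bits assms by blast
  with aa ww show ?thesis by simp
qed



lemma smult_smult_mat: "x \<cdot>\<^sub>m (y \<cdot>\<^sub>m (A :: complex mat)) = (x * y) \<cdot>\<^sub>m A"
  by (intro eq_matI) auto

lemma smult_one_mat[simp]: "(1::complex) \<cdot>\<^sub>m A = A"
  by (intro eq_matI) auto

definition Om :: "complex set" where "Om = {1, -1, \<i>, -\<i>}"

lemma Om_mult: "x \<in> Om \<Longrightarrow> y \<in> Om \<Longrightarrow> x * y \<in> Om"
  by (auto simp: Om_def)
lemma Om_cnj: "x \<in> Om \<Longrightarrow> cnj x \<in> Om"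
  by (auto simp: Om_def)
lemma Om_cnj_mult: "x \<in> Om \<Longrightarrow> cnj x * x = 1"
  by (auto simp: Om_def)
lemma Om_nz: "x \<in> Om \<Longrightarrow> x \<noteq> 0"
  by (auto simp: Om_def)
lemma Om_1[simp]: "1 \<in> Om" by (simp add: Om_def)
lemma Om_cmod: "x \<in> Om \<Longrightarrow> cmod x = 1"
  by (auto simp: Om_def)
lemma Om_prod: "(\<And>k. k < n \<Longrightarrow> f k \<in> Om) \<Longrightarrow> (\<Prod>k<(n::nat). f k) \<in> Om"
  by (induct n) (auto intro: Om_mult)

definition code :: "bool \<Rightarrow> bool \<Rightarrow> nat" where
  "code \<alpha> \<beta> = (if \<alpha> then (if \<beta> then 2 else 1) else (if \<beta> then 3 else 0))"

lemma pauli1_code: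
  assumes "x < 2" "y < 2"
  shows "pauli1 (code \<alpha> \<beta>) $$ (x,y) =
    (if \<alpha> \<and> \<beta> then \<i> else 1) * (if (x = 1) = ((y = 1) \<noteq> \<alpha>) then sg (\<beta> \<and> y = 1) else 0)"
proof -
  have x: "x = 0 \<or> x = 1" and y: "y = 0 \<or> y = 1" using assms by auto
  show ?thesis using x y
    by (cases \<alpha>; cases \<beta>; auto simp: pauli1_def code_def mat_of_rows_list_def sg_def)
qed

lemma prod_if_zero:
  "(\<Prod>k<(n::nat). if P k then f k else 0) = (if \<forall>k<n. P k then \<Prod>k<n. f k else (0::complex))"
  by (induct n) (auto simp: less_Suc_eq)

definition ph :: "nat \<Rightarrow> nat \<Rightarrow> nat \<Rightarrow> complex" where
  "ph n a b = (\<Prod>k<n. if bit a k \<and> bit b k then \<i> else 1)"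

lemma ph_Om: "ph n a b \<in> Om"
  unfolding ph_def by (rule Om_prod) (auto simp: Om_def)

lemma bits_xor_eq:
  fixes i j a n :: nat
  assumes "i < 2^n" "j < 2^n" "a < 2^n"
  shows "(\<forall>k<n. bit i k = (bit j k \<noteq> bit a k)) \<longleftrightarrow> i = j XOR a"
proof
  assume "\<forall>k<n. bit i k = (bit j k \<noteq> bit a k)"
  then show "i = j XOR a"
    using nat_eq_bits[OF assms(1) xor_lt_pow[OF assms(2,3)]] by (simp add: bit_xor_iff)
qed (simp add: bit_xor_iff)

lemma div_mod_bit: "(i::nat) div 2^k mod 2 = of_bool (bit i k)"
  by (simp add: bit_iff_odd odd_iff_mod_2_eq_one)

lemma pauli_string_XZ:
  assumes "a < 2^n"
  shows "pauli_string n (\<lambda>k. code (bit a k) (bit b k)) = ph n a b \<cdot>\<^sub>m XZ n a b"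
proof (rule eq_matI)
  fix i j assume "i < dim_row (ph n a b \<cdot>\<^sub>m XZ n a b)" "j < dim_col (ph n a b \<cdot>\<^sub>m XZ n a b)"
  then have i: "i < 2^n" and j: "j < 2^n" by auto
  have "pauli_string n (\<lambda>k. code (bit a k) (bit b k)) $$ (i,j) =
     (\<Prod>k<n. pauli1 (code (bit a k) (bit b k)) $$ (of_bool (bit i k), of_bool (bit j k)))"
    using i j by (simp add: pauli_string_def div_mod_bit)
  also have "\<dots> = (\<Prod>k<n. (if bit a k \<and> bit b k then \<i> else 1) *
       (if bit i k = (bit j k \<noteq> bit a k) then sg (bit b k \<and> bit j k) else 0))"
    by (intro prod.cong refl, subst pauli1_code) auto
  also have "\<dots> = ph n a b * (if \<forall>k<n. bit i k = (bit j k \<noteq> bit a k) then chi n b j else 0)"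
    by (simp only: prod.distrib prod_if_zero ph_def chi_def)
  also have "\<dots> = (ph n a b \<cdot>\<^sub>m XZ n a b) $$ (i,j)"
    using i j assms by (subst bits_xor_eq[OF i j assms]) (simp add: XZ_index)
  finally show "pauli_string n (\<lambda>k. code (bit a k) (bit b k)) $$ (i,j) = (ph n a b \<cdot>\<^sub>m XZ n a b) $$ (i,j)" .
qed (auto simp: pauli_string_def)

lemma pauli_string_cong: "(\<And>k. k < n \<Longrightarrow> p k = q k) \<Longrightarrow> pauli_string n p = pauli_string n q"
  unfolding pauli_string_def by (intro eq_matI) auto

definition PG :: "nat \<Rightarrow> complex mat set" where
  "PG n = {w \<cdot>\<^sub>m XZ n a b | w a b. w \<in> Om \<and> a < 2^n \<and> b < 2^n}"

lemma pauli_group_eq: "pauli_group n = PG n"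
proof
  show "pauli_group n \<subseteq> PG n"
  proof
    fix P assume "P \<in> pauli_group n"
    then obtain w p where w: "w \<in> Om" and p: "\<forall>k<n. p k < 4" and P: "P = w \<cdot>\<^sub>m pauli_string n p"
      unfolding pauli_group_def Om_def by blast
    define a where "a = of_bits n (\<lambda>k. p k = 1 \<or> p k = 2)"
    define b where "b = of_bits n (\<lambda>k. p k = 2 \<or> p k = 3)"
    have a: "a < 2^n" and b: "b < 2^n" unfolding a_def b_def by (auto simp: of_bits_lt)
    have "pauli_string n p = pauli_string n (\<lambda>k. code (bit a k) (bit b k))"
    proof (rule pauli_string_cong)
      fix k assume k: "k < n"
      then have "p k = 0 \<or> p k = 1 \<or> p k = 2 \<or> p k = 3" using p by auto
      then show "p k = code (bit a k) (bit b k)" using k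
        by (auto simp: a_def b_def bit_of_bits code_def)
    qed
    then have "P = (w * ph n a b) \<cdot>\<^sub>m XZ n a b" using P by (simp add: pauli_string_XZ[OF a] smult_smult_mat)
    moreover have "w * ph n a b \<in> Om" using Om_mult[OF w ph_Om] .
    ultimately show "P \<in> PG n" using a b unfolding PG_def by blast
  qed
next
  show "PG n \<subseteq> pauli_group n"
  proof
    fix P assume "P \<in> PG n"
    then obtain w a b where w: "w \<in> Om" and a: "a < 2^n" and b: "b < 2^n" and P: "P = w \<cdot>\<^sub>m XZ n a b"
      unfolding PG_def by blast
    have "P = (w * cnj (ph n a b)) \<cdot>\<^sub>m pauli_string n (\<lambda>k. code (bit a k) (bit b k))"
      using P by (simp add: pauli_string_XZ[OF a] smult_smult_mat mult.assoc Om_cnj_mult[OF ph_Om])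
    moreover have "w * cnj (ph n a b) \<in> {1, -1, \<i>, -\<i>}"
      using Om_mult[OF w Om_cnj[OF ph_Om]] by (simp add: Om_def)
    moreover have "\<forall>k<n. (\<lambda>k. code (bit a k) (bit b k)) k < 4" by (simp add: code_def)
    ultimately show "P \<in> pauli_group n" unfolding pauli_group_def by blast
  qed
qed

lemma XZ_in_PG: "a < 2^n \<Longrightarrow> b < 2^n \<Longrightarrow> w \<in> Om \<Longrightarrow> w \<cdot>\<^sub>m XZ n a b \<in> pauli_group n"
  unfolding pauli_group_eq PG_def by blast



definition Lab :: "nat \<Rightarrow> (nat \<times> nat) set" where "Lab n = {..<2^n} \<times> {..<2^n}"
definition xp :: "nat \<times> nat \<Rightarrow> nat \<times> nat \<Rightarrow> nat \<times> nat" where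
  "xp v w = (fst v XOR fst w, snd v XOR snd w)"

lemma Lab_finite[simp]: "finite (Lab n)" by (simp add: Lab_def)
lemma Lab_card: "card (Lab n) = 2^(2*n)"
  by (simp add: Lab_def card_cartesian_product power_mult[symmetric] power_add[symmetric] mult_2)
lemma Lab_0[simp]: "(0,0) \<in> Lab n" by (simp add: Lab_def)
lemma xp_Lab[simp]: "v \<in> Lab n \<Longrightarrow> w \<in> Lab n \<Longrightarrow> xp v w \<in> Lab n"
  by (auto simp: Lab_def xp_def intro: xor_lt_pow)
lemma xp_assoc: "xp (xp u v) w = xp u (xp v w)" by (simp add: xp_def xor.assoc)
lemma xp_comm: "xp u v = xp v u" by (simp add: xp_def xor.commute)
lemma xp_self[simp]: "xp v v = (0,0)" by (simp add: xp_def)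
lemma xp_0[simp]: "xp v (0,0) = v" "xp (0,0) v = v" by (simp_all add: xp_def)
lemma xp_cancel[simp]: "xp (xp u v) v = u" "xp v (xp v u) = u"
  by (simp add: xp_def xor.assoc) (simp add: xp_def flip: xor.assoc)
lemma xp_eq0: "xp u v = (0,0) \<longleftrightarrow> u = v"
  by (metis xp_cancel(1) xp_0(2) xp_self)

definition addf :: "nat \<Rightarrow> (nat \<times> nat \<Rightarrow> nat \<times> nat) \<Rightarrow> bool" where
  "addf n f \<longleftrightarrow> (\<forall>v\<in>Lab n. f v \<in> Lab n) \<and> (\<forall>v\<in>Lab n. \<forall>w\<in>Lab n. f (xp v w) = xp (f v) (f w))"

lemma addf_0: "addf n f \<Longrightarrow> f (0,0) = (0,0)"
  unfolding addf_def by (metis Lab_0 xp_self xp_cancel(1))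

lemma addf_pow: "addf n f \<Longrightarrow> addf n (f ^^ j)"
proof (induct j)
  case 0 then show ?case by (simp add: addf_def)
next
  case (Suc j) then show ?case unfolding addf_def by simp
qed

lemma addf_Lab: "addf n f \<Longrightarrow> v \<in> Lab n \<Longrightarrow> f v \<in> Lab n" by (simp add: addf_def)
lemma addf_xp: "addf n f \<Longrightarrow> v \<in> Lab n \<Longrightarrow> w \<in> Lab n \<Longrightarrow> f (xp v w) = xp (f v) (f w)"
  by (simp add: addf_def)

definition Kn :: "nat \<Rightarrow> (nat \<times> nat \<Rightarrow> nat \<times> nat) \<Rightarrow> nat \<Rightarrow> (nat \<times> nat) set" where
  "Kn n f j = {v \<in> Lab n. (f ^^ j) v = (0,0)}"

lemma Kn_mono_Suc: "addf n f \<Longrightarrow> Kn n f j \<subseteq> Kn n f (Suc j)"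
  by (auto simp: Kn_def addf_0)

lemma Kn_mono: "addf n f \<Longrightarrow> j \<le> l \<Longrightarrow> Kn n f j \<subseteq> Kn n f l"
proof (induct l)
  case 0 then show ?case by simp
next
  case (Suc l) then show ?case using Kn_mono_Suc[OF Suc.prems(1), of l] by (auto simp: le_Suc_eq)
qed

lemma Kn_stable_step:
  assumes f: "addf n f" and eq: "Kn n f j = Kn n f (Suc j)"
  shows "Kn n f (Suc j) = Kn n f (Suc (Suc j))"
proof
  show "Kn n f (Suc j) \<subseteq> Kn n f (Suc (Suc j))" by (rule Kn_mono_Suc[OF f])
  show "Kn n f (Suc (Suc j)) \<subseteq> Kn n f (Suc j)"
  proof
    fix v assume v: "v \<in> Kn n f (Suc (Suc j))"
    then have "f v \<in> Kn n f (Suc j)"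
      using addf_Lab[OF f] by (auto simp: Kn_def funpow_Suc_right simp del: funpow.simps)
    then have "f v \<in> Kn n f j" using eq by simp
    then show "v \<in> Kn n f (Suc j)" using v
      by (auto simp: Kn_def funpow_Suc_right simp del: funpow.simps)
  qed
qed

lemma Kn_stable:
  assumes f: "addf n f" and eq: "Kn n f j = Kn n f (Suc j)"
  shows "l \<ge> j \<Longrightarrow> Kn n f l = Kn n f j"
proof (induct l)
  case 0 then show ?case by simp
next
  case (Suc l)
  show ?case
  proof (cases "l \<ge> j")
    case True
    then obtain d where l: "l = j + d" by (metis le_add_diff_inverse)
    have "Kn n f (j + d) = Kn n f (Suc (j + d))"
    proof (induct d)
      case 0 then show ?case using eq by simp
    next
      case (Suc d) then show ?case using Kn_stable_step[OF f] by (metis add_Suc_right)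
    qed
    then show ?thesis using Suc True l by simp
  next
    case False then have "Suc l = j" using Suc.prems by simp
    then show ?thesis by simp
  qed
qed

lemma Kn_0: "Kn n f 0 = {(0,0)}" by (auto simp: Kn_def)

lemma Kn_xp: "addf n f \<Longrightarrow> v \<in> Kn n f j \<Longrightarrow> w \<in> Kn n f j \<Longrightarrow> xp v w \<in> Kn n f j"
  using addf_pow[of n f j] by (auto simp: Kn_def addf_xp)

lemma Kn_sub: "Kn n f j \<subseteq> Lab n" by (auto simp: Kn_def)

lemma nilp_bound:
  assumes f: "addf n f" and nil: "\<forall>v\<in>Lab n. (f ^^ k) v = (0,0)"
  shows "\<forall>v\<in>Lab n. (f ^^ (2*n)) v = (0,0)"
proof -
  have KL: "Kn n f k = Lab n" unfolding Kn_def using nil by blast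
  have claim: "Kn n f j = Lab n \<or> 2^j \<le> card (Kn n f j)" for j
  proof (induct j)
    case 0 then show ?case by (simp add: Kn_0)
  next
    case (Suc j)
    show ?case
    proof (cases "Kn n f j = Lab n")
      case True
      then show ?thesis using Kn_mono_Suc[OF f, of j] Kn_sub[of n f "Suc j"] by blast
    next
      case False
      with Suc have c: "2^j \<le> card (Kn n f j)" by simp
      show ?thesis
      proof (cases "Kn n f (Suc j) = Lab n")
        case True then show ?thesis by simp
      next
        case F2: False
        have ne: "Kn n f j \<noteq> Kn n f (Suc j)"
        proof
          assume eq: "Kn n f j = Kn n f (Suc j)"
          have "Kn n f (max j k) = Kn n f j" using Kn_stable[OF f eq, of "max j k"] by simp
          moreover have "Kn n f k \<subseteq> Kn n f (max j k)" using Kn_mono[OF f] by simp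
          ultimately have "Kn n f j = Lab n" using KL Kn_sub[of n f j] by blast
          with False show False by simp
        qed
        then obtain a where a: "a \<in> Kn n f (Suc j)" "a \<notin> Kn n f j"
          using Kn_mono_Suc[OF f, of j] by blast
        have sub: "Kn n f j \<union> xp a ` Kn n f j \<subseteq> Kn n f (Suc j)"
          using Kn_mono_Suc[OF f, of j] Kn_xp[OF f a(1)] by blast
        have disj: "Kn n f j \<inter> xp a ` Kn n f j = {}"
        proof -
          { fix v assume v: "v \<in> Kn n f j" "xp a v \<in> Kn n f j"
            then have "xp (xp a v) v \<in> Kn n f j" using Kn_xp[OF f] by blast
            with a(2) have False by simp }
          then show ?thesis by blast
        qed
        have inj: "inj_on (xp a) (Kn n f j)"
        proof (rule inj_onI)
          fix v w assume "xp a v = xp a w"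
          then have "xp a (xp a v) = xp a (xp a w)" by simp
          then show "v = w" by simp
        qed
        have fin: "finite (Kn n f j)" by (rule finite_subset[OF Kn_sub Lab_finite])
        have "card (Kn n f j \<union> xp a ` Kn n f j) = 2 * card (Kn n f j)"
          using card_Un_disjoint[OF fin finite_imageI[OF fin] disj] card_image[OF inj] by simp
        moreover have "card (Kn n f j \<union> xp a ` Kn n f j) \<le> card (Kn n f (Suc j))"
          by (rule card_mono[OF finite_subset[OF Kn_sub Lab_finite] sub])
        ultimately show ?thesis using c by simp
      qed
    qed
  qed
  have "Kn n f (2*n) = Lab n"
  proof (cases "Kn n f (2*n) = Lab n")
    case False
    with claim have "2^(2*n) \<le> card (Kn n f (2*n))" by blast
    then have "card (Lab n) \<le> card (Kn n f (2*n))" by (simp add: Lab_card)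
    then show ?thesis using card_seteq[OF Lab_finite Kn_sub] by blast
  qed simp
  then show ?thesis by (auto simp: Kn_def)
qed

lemma Kn_card_bound:
  assumes f: "addf n f" and K1: "card (Kn n f 1) \<le> 2"
  shows "card (Kn n f j) \<le> 2^j"
proof (induct j)
  case 0 then show ?case by (simp add: Kn_0)
next
  case (Suc j)
  define sel where "sel y = (SOME x. x \<in> Kn n f (Suc j) \<and> f x = y)" for y
  have sub: "Kn n f (Suc j) \<subseteq> (\<lambda>(y,k). xp (sel y) k) ` (f ` Kn n f (Suc j) \<times> Kn n f 1)"
  proof
    fix v assume v: "v \<in> Kn n f (Suc j)"
    have "\<exists>x. x \<in> Kn n f (Suc j) \<and> f x = f v" using v by blast
    then have s: "sel (f v) \<in> Kn n f (Suc j)" "f (sel (f v)) = f v"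
      unfolding sel_def by (metis (mono_tags, lifting) someI_ex)+
    have vL: "v \<in> Lab n" and sL: "sel (f v) \<in> Lab n" using v s(1) Kn_sub by blast+
    have "xp (sel (f v)) v \<in> Kn n f 1"
      using addf_xp[OF f sL vL] s(2) vL sL by (simp add: Kn_def)
    moreover have "v = xp (sel (f v)) (xp (sel (f v)) v)" by simp
    ultimately show "v \<in> (\<lambda>(y,k). xp (sel y) k) ` (f ` Kn n f (Suc j) \<times> Kn n f 1)"
      using v by force
  qed
  have img: "f ` Kn n f (Suc j) \<subseteq> Kn n f j"
    using addf_Lab[OF f] by (auto simp: Kn_def funpow_Suc_right simp del: funpow.simps)
  have finK: "finite (Kn n f i)" for i by (rule finite_subset[OF Kn_sub Lab_finite])
  have "card (Kn n f (Suc j)) \<le> card (f ` Kn n f (Suc j) \<times> Kn n f 1)"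
    using card_mono[OF finite_imageI[OF finite_cartesian_product[OF finite_imageI[OF finK] finK]] sub]
      card_image_le[OF finite_cartesian_product[OF finite_imageI[OF finK] finK]] le_trans by blast
  also have "\<dots> = card (f ` Kn n f (Suc j)) * card (Kn n f 1)" by (rule card_cartesian_product)
  also have "\<dots> \<le> card (Kn n f j) * 2"
    using card_mono[OF finK img] K1 by (intro mult_mono) auto
  also have "\<dots> \<le> 2^(Suc j)" using Suc by simp
  finally show ?case .
qed

lemma char2_pow:
  assumes f: "addf n f"
  shows "v \<in> Lab n \<Longrightarrow> ((\<lambda>v. xp (f v) v) ^^ (2^s)) v = xp ((f ^^ (2^s)) v) v"
proof (induct s arbitrary: v)
  case 0 then show ?case by simp
next
  case (Suc s)
  let ?M = "\<lambda>v. xp (f v) v"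
  have Mlab: "(?M ^^ j) v \<in> Lab n" if "v \<in> Lab n" for j v
    using that proof (induct j) case (Suc j) then show ?case using addf_Lab[OF f] by simp qed simp
  have fL: "(f ^^ j) v \<in> Lab n" if "v \<in> Lab n" for j v using addf_Lab[OF addf_pow[OF f] that] .
  have "(?M ^^ (2^Suc s)) v = (?M ^^ (2^s)) ((?M ^^ (2^s)) v)"
    by (simp only: power_Suc mult_2 funpow_add comp_def)
  also have "\<dots> = xp ((f ^^ (2^s)) ((?M ^^ (2^s)) v)) ((?M ^^ (2^s)) v)"
    using Suc.hyps[OF Mlab[OF Suc.prems]] .
  also have "(?M ^^ (2^s)) v = xp ((f ^^ (2^s)) v) v" using Suc.hyps[OF Suc.prems] .
  also have "xp ((f ^^ (2^s)) (xp ((f ^^ (2^s)) v) v)) (xp ((f ^^ (2^s)) v) v) =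
             xp ((f ^^ (2^s)) ((f ^^ (2^s)) v)) v"
    using addf_xp[OF addf_pow[OF f] fL[OF Suc.prems] Suc.prems]
    by (simp add: xp_assoc)
  also have "(f ^^ (2^s)) ((f ^^ (2^s)) v) = (f ^^ (2^Suc s)) v"
    by (simp only: power_Suc mult_2 funpow_add comp_def)
  finally show ?case .
qed



lemma sq_mult[simp]: "A \<in> carrier_mat d d \<Longrightarrow> B \<in> carrier_mat d d \<Longrightarrow> A * B \<in> carrier_mat d d"
  by (rule mult_carrier_mat)
lemma sq_adj[simp]: "A \<in> carrier_mat d d \<Longrightarrow> adjoint_mat A \<in> carrier_mat d d"
  by simp
lemma assoc_sq: "A \<in> carrier_mat d d \<Longrightarrow> B \<in> carrier_mat d d \<Longrightarrow> C \<in> carrier_mat d d \<Longrightarrow> A * B * C = A * (B * C)"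
  by (rule assoc_mult_mat)

lemma smult_mult_smult: "A \<in> carrier_mat d d \<Longrightarrow> B \<in> carrier_mat d d \<Longrightarrow>
   (x \<cdot>\<^sub>m A) * (y \<cdot>\<^sub>m B) = (x * y) \<cdot>\<^sub>m (A * (B :: complex mat))"
  by (simp add: mult_smult_distrib[of _ d d _ d] mult_smult_assoc_mat[of _ d d _ d] smult_smult_mat mult.commute)

definition XZp :: "nat \<Rightarrow> nat \<times> nat \<Rightarrow> complex mat" where "XZp n v = XZ n (fst v) (snd v)"

lemma XZp_carrier[simp]: "XZp n v \<in> carrier_mat (2^n) (2^n)" by (simp add: XZp_def)

lemma XZp_mult: "v \<in> Lab n \<Longrightarrow> w \<in> Lab n \<Longrightarrow>
   XZp n v * XZp n w = chi n (snd v) (fst w) \<cdot>\<^sub>m XZp n (xp v w)"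
  by (simp add: XZp_def XZ_mult Lab_def xp_def mem_Times_iff)

lemma XZp_inj: "v \<in> Lab n \<Longrightarrow> w \<in> Lab n \<Longrightarrow> x \<noteq> 0 \<Longrightarrow> x \<cdot>\<^sub>m XZp n v = y \<cdot>\<^sub>m XZp n w \<Longrightarrow> v = w \<and> x = y"
  using XZ_inj[of "fst v" n "snd v" "fst w" "snd w" x y] by (auto simp: XZp_def Lab_def prod_eq_iff)

lemma XZp_adj: "v \<in> Lab n \<Longrightarrow> adjoint_mat (XZp n v) = chi n (snd v) (fst v) \<cdot>\<^sub>m XZp n v"
  by (simp add: XZp_def XZ_adj Lab_def mem_Times_iff)

definition cj :: "complex mat \<Rightarrow> complex mat \<Rightarrow> complex mat" where
  "cj U A = U * A * adjoint_mat U"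

lemma cancel_left:
  assumes "U \<in> carrier_mat d d" "adjoint_mat U * U = 1\<^sub>m d" "X \<in> carrier_mat d c"
  shows "adjoint_mat U * (U * X) = X"
proof -
  have "adjoint_mat U * (U * X) = (adjoint_mat U * U) * X"
    using assms by (subst assoc_mult_mat[of _ d d _ d _ c]) auto
  also have "\<dots> = X" using assms by simp
  finally show ?thesis .
qed

lemma cj_carrier[simp]: "U \<in> carrier_mat d d \<Longrightarrow> A \<in> carrier_mat d d \<Longrightarrow> cj U A \<in> carrier_mat d d"
  by (simp add: cj_def)

lemma cj_mult:
  assumes U: "U \<in> carrier_mat d d" "adjoint_mat U * U = 1\<^sub>m d"
    and A: "A \<in> carrier_mat d d" and B: "B \<in> carrier_mat d d"
  shows "cj U (A * B) = cj U A * cj U B"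
proof -
  have aU: "adjoint_mat U \<in> carrier_mat d d" using U by simp
  have "cj U A * cj U B = U * (A * (adjoint_mat U * (U * (B * adjoint_mat U))))"
    using U A B aU by (simp add: cj_def assoc_sq[of _ d])
  also have "adjoint_mat U * (U * (B * adjoint_mat U)) = B * adjoint_mat U"
    using cancel_left[OF U, of "B * adjoint_mat U" d] B aU by simp
  finally show ?thesis using U A B aU by (simp add: cj_def assoc_sq[of _ d])
qed

lemma cj_smult:
  assumes "U \<in> carrier_mat d d" "A \<in> carrier_mat d d"
  shows "cj U (x \<cdot>\<^sub>m A) = x \<cdot>\<^sub>m cj U A"
  using assms by (simp add: cj_def mult_smult_distrib[of _ d d _ d] mult_smult_assoc_mat[of _ d d _ d])

lemma cj_smult_left:
  assumes "U \<in> carrier_mat d d" "A \<in> carrier_mat d d"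
  shows "cj (x \<cdot>\<^sub>m U) A = (x * cnj x) \<cdot>\<^sub>m cj U A"
  using assms by (simp add: cj_def adjoint_smult mult_smult_distrib[of _ d d _ d] mult_smult_assoc_mat[of _ d d _ d] smult_smult_mat mult_ac)

lemma cj_comp:
  assumes "U \<in> carrier_mat d d" "V \<in> carrier_mat d d" "A \<in> carrier_mat d d"
  shows "cj (U * V) A = cj U (cj V A)"
  using assms by (simp add: cj_def adjoint_mult[of _ d d _ d] assoc_sq[of _ d])

lemma cj_one: "A \<in> carrier_mat d d \<Longrightarrow> cj (1\<^sub>m d) A = A"
  by (simp add: cj_def)

definition conjrel :: "nat \<Rightarrow> complex mat \<Rightarrow> nat \<times> nat \<Rightarrow> nat \<times> nat \<Rightarrow> bool" where
  "conjrel n U v w \<longleftrightarrow> (\<exists>x. x \<noteq> 0 \<and> cj U (XZp n v) = x \<cdot>\<^sub>m XZp n w)"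

lemma conj_unique: "conjrel n U v w \<Longrightarrow> conjrel n U v w' \<Longrightarrow> w \<in> Lab n \<Longrightarrow> w' \<in> Lab n \<Longrightarrow> w = w'"
  unfolding conjrel_def using XZp_inj by metis

lemma clifford_carrier: "U \<in> clifford_group n \<Longrightarrow> U \<in> carrier_mat (2^n) (2^n)"
  and clifford_unit: "U \<in> clifford_group n \<Longrightarrow> U * adjoint_mat U = 1\<^sub>m (2^n)"
  and clifford_unit': "U \<in> clifford_group n \<Longrightarrow> adjoint_mat U * U = 1\<^sub>m (2^n)"
  by (auto simp: clifford_group_def unitary_mat_def intro: unitary_left)

lemma clifford_conj:
  assumes U: "U \<in> clifford_group n" and v: "v \<in> Lab n"
  shows "\<exists>w\<in>Lab n. conjrel n U v w"
proof -
  have "XZp n v \<in> pauli_group n" using XZ_in_PG[of "fst v" n "snd v" 1] v by (simp add: XZp_def Lab_def mem_Times_iff)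
  then have "cj U (XZp n v) \<in> PG n" using U by (simp add: clifford_group_def cj_def pauli_group_eq)
  then obtain x a b where "x \<in> Om" "a < 2^n" "b < 2^n" "cj U (XZp n v) = x \<cdot>\<^sub>m XZ n a b"
    unfolding PG_def by blast
  then show ?thesis unfolding conjrel_def using Om_nz
    by (intro bexI[of _ "(a,b)"]) (auto simp: XZp_def Lab_def)
qed

definition Phi :: "nat \<Rightarrow> complex mat \<Rightarrow> nat \<times> nat \<Rightarrow> nat \<times> nat" where
  "Phi n U v = (SOME w. w \<in> Lab n \<and> conjrel n U v w)"

lemma Phi_props:
  assumes "U \<in> clifford_group n" "v \<in> Lab n"
  shows "Phi n U v \<in> Lab n" "conjrel n U v (Phi n U v)"
  using someI_ex[OF clifford_conj[OF assms, unfolded Bex_def]] unfolding Phi_def by auto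

lemma Phi_eq:
  assumes "U \<in> clifford_group n" "v \<in> Lab n" "w \<in> Lab n" "conjrel n U v w"
  shows "Phi n U v = w"
  using conj_unique Phi_props[OF assms(1,2)] assms(3,4) by blast

lemma Phi_add:
  assumes U: "U \<in> clifford_group n"
  shows "addf n (Phi n U)"
  unfolding addf_def
proof (intro conjI ballI)
  fix v assume "v \<in> Lab n" then show "Phi n U v \<in> Lab n" by (rule Phi_props(1)[OF U])
next
  fix v w assume v: "v \<in> Lab n" and w: "w \<in> Lab n"
  let ?D = "2^n"
  have Uc: "U \<in> carrier_mat ?D ?D" and Uu: "adjoint_mat U * U = 1\<^sub>m ?D"
    using clifford_carrier[OF U] clifford_unit'[OF U] .
  obtain x where x: "x \<noteq> 0" "cj U (XZp n v) = x \<cdot>\<^sub>m XZp n (Phi n U v)"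
    using Phi_props(2)[OF U v] unfolding conjrel_def by blast
  obtain y where y: "y \<noteq> 0" "cj U (XZp n w) = y \<cdot>\<^sub>m XZp n (Phi n U w)"
    using Phi_props(2)[OF U w] unfolding conjrel_def by blast
  have pv: "Phi n U v \<in> Lab n" and pw: "Phi n U w \<in> Lab n" using Phi_props(1)[OF U] v w by auto
  have e: "XZp n (xp v w) = chi n (snd v) (fst w) \<cdot>\<^sub>m (XZp n v * XZp n w)"
    using XZp_mult[OF v w] by (simp add: smult_smult_mat)
  have "cj U (XZp n (xp v w)) = chi n (snd v) (fst w) \<cdot>\<^sub>m (cj U (XZp n v) * cj U (XZp n w))"
    unfolding e
    using cj_smult[OF Uc sq_mult[OF XZp_carrier XZp_carrier]] cj_mult[OF Uc Uu XZp_carrier XZp_carrier] by simp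
  also have "\<dots> = (chi n (snd v) (fst w) * x * y * chi n (snd (Phi n U v)) (fst (Phi n U w))) \<cdot>\<^sub>m
      XZp n (xp (Phi n U v) (Phi n U w))"
    unfolding x y smult_mult_smult[OF XZp_carrier XZp_carrier] XZp_mult[OF pv pw] smult_smult_mat
    by (simp only: mult_ac)
  finally have eq: "cj U (XZp n (xp v w)) = (chi n (snd v) (fst w) * x * y * chi n (snd (Phi n U v)) (fst (Phi n U w))) \<cdot>\<^sub>m
      XZp n (xp (Phi n U v) (Phi n U w))" .
  have nz: "chi n (snd v) (fst w) * x * y * chi n (snd (Phi n U v)) (fst (Phi n U w)) \<noteq> 0" using x y by simp
  have "conjrel n U (xp v w) (xp (Phi n U v) (Phi n U w))"
    unfolding conjrel_def using nz eq by blast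
  then show "Phi n U (xp v w) = xp (Phi n U v) (Phi n U w)"
    by (rule Phi_eq[OF U xp_Lab[OF v w] xp_Lab[OF pv pw]])
qed



lemma pow_one_mat: "U \<in> carrier_mat d d \<Longrightarrow> U ^\<^sub>m 0 = 1\<^sub>m d" by simp

lemma Phi_pow:
  assumes U: "U \<in> clifford_group n"
  shows "v \<in> Lab n \<Longrightarrow> conjrel n (U ^\<^sub>m k) v ((Phi n U ^^ k) v)"
proof (induct k arbitrary: v)
  case 0
  have Uc: "U \<in> carrier_mat (2^n) (2^n)" using clifford_carrier[OF U] .
  show ?case unfolding conjrel_def pow_one_mat[OF Uc]
    by (intro exI[of _ 1]) (simp add: cj_one[OF XZp_carrier])
next
  case (Suc k)
  have Uc: "U \<in> carrier_mat (2^n) (2^n)" using clifford_carrier[OF U] .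
  obtain x where x: "x \<noteq> 0" "cj U (XZp n v) = x \<cdot>\<^sub>m XZp n (Phi n U v)"
    using Phi_props(2)[OF U Suc.prems] unfolding conjrel_def by blast
  obtain y where y: "y \<noteq> 0" "cj (U ^\<^sub>m k) (XZp n (Phi n U v)) = y \<cdot>\<^sub>m XZp n ((Phi n U ^^ k) (Phi n U v))"
    using Suc.hyps[OF Phi_props(1)[OF U Suc.prems]] unfolding conjrel_def by blast
  have "cj (U ^\<^sub>m Suc k) (XZp n v) = cj (U ^\<^sub>m k) (cj U (XZp n v))"
    using Uc by (simp add: cj_comp[of _ "2^n"])
  also have "\<dots> = (x * y) \<cdot>\<^sub>m XZp n ((Phi n U ^^ Suc k) v)"
    unfolding x(2) cj_smult[OF pow_carrier_mat[OF Uc] XZp_carrier] y(2)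
    by (simp add: smult_smult_mat funpow_Suc_right del: funpow.simps)
  finally show ?case unfolding conjrel_def using x(1) y(1) by (intro exI[of _ "x*y"]) simp
qed

lemma XZp_cj: "v \<in> Lab n \<Longrightarrow> w \<in> Lab n \<Longrightarrow> \<exists>z. z \<noteq> 0 \<and> cj (XZp n v) (XZp n w) = z \<cdot>\<^sub>m XZp n w"
proof -
  assume v: "v \<in> Lab n" and w: "w \<in> Lab n"
  have "cj (XZp n v) (XZp n w) = XZp n v * XZp n w * (chi n (snd v) (fst v) \<cdot>\<^sub>m XZp n v)"
    unfolding cj_def XZp_adj[OF v] ..
  also have "\<dots> = (chi n (snd v) (fst w) * chi n (snd v) (fst v)) \<cdot>\<^sub>m (XZp n (xp v w) * XZp n v)"
    unfolding XZp_mult[OF v w] by (simp add: mult_smult_distrib[of _ "2^n" "2^n" _ "2^n"]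
        mult_smult_assoc_mat[of _ "2^n" "2^n" _ "2^n"] smult_smult_mat mult_ac)
  also have "\<dots> = (chi n (snd v) (fst w) * chi n (snd v) (fst v) * chi n (snd (xp v w)) (fst v)) \<cdot>\<^sub>m XZp n w"
    unfolding XZp_mult[OF xp_Lab[OF v w] v] by (simp add: smult_smult_mat xp_comm[of v w])
  finally show ?thesis by (intro exI[of _ "chi n (snd v) (fst w) * chi n (snd v) (fst v) * chi n (snd (xp v w)) (fst v)"]) simp
qed

lemma proj_fix:
  assumes U: "U \<in> clifford_group n" and eq: "U ^\<^sub>m k = c \<cdot>\<^sub>m P" and c: "c \<noteq> 0"
    and P: "P \<in> pauli_group n" and w: "w \<in> Lab n"
  shows "(Phi n U ^^ k) w = w"
proof -
  obtain x a b where x: "x \<in> Om" and a: "a < 2^n" and b: "b < 2^n" and Pe: "P = x \<cdot>\<^sub>m XZ n a b"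
    using P unfolding pauli_group_eq PG_def by blast
  have v: "(a,b) \<in> Lab n" using a b by (simp add: Lab_def)
  have Pe': "U ^\<^sub>m k = (c * x) \<cdot>\<^sub>m XZp n (a,b)" using eq Pe by (simp add: smult_smult_mat XZp_def)
  obtain z where z: "z \<noteq> 0" "cj (XZp n (a,b)) (XZp n w) = z \<cdot>\<^sub>m XZp n w" using XZp_cj[OF v w] by blast
  have "cj (U ^\<^sub>m k) (XZp n w) = ((c * x) * cnj (c * x) * z) \<cdot>\<^sub>m XZp n w"
    unfolding Pe' cj_smult_left[OF XZp_carrier XZp_carrier] z(2) by (simp add: smult_smult_mat)
  moreover have "(c * x) * cnj (c * x) * z \<noteq> 0" using c z(1) Om_nz[OF x] by simp
  ultimately have "conjrel n (U ^\<^sub>m k) w w" unfolding conjrel_def by blast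
  moreover have "(Phi n U ^^ k) w \<in> Lab n" using addf_Lab[OF addf_pow[OF Phi_add[OF U]] w] .
  ultimately show ?thesis using conj_unique Phi_pow[OF U w, of k] w by blast
qed

lemma unitary_pow:
  assumes U: "U \<in> carrier_mat d d" "U * adjoint_mat U = 1\<^sub>m d"
  shows "U ^\<^sub>m k * adjoint_mat (U ^\<^sub>m k) = 1\<^sub>m d"
proof (induct k)
  case 0 then show ?case using U by simp
next
  case (Suc k)
  have Pk: "U ^\<^sub>m k \<in> carrier_mat d d" using U by simp
  have aP: "adjoint_mat (U ^\<^sub>m k) \<in> carrier_mat d d" using Pk by simp
  have c: "U * (adjoint_mat U * adjoint_mat (U ^\<^sub>m k)) = adjoint_mat (U ^\<^sub>m k)"
    using assoc_sq[OF U(1) sq_adj[OF U(1)] aP] U aP by simp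
  have "U ^\<^sub>m Suc k * adjoint_mat (U ^\<^sub>m Suc k) = U ^\<^sub>m k * (U * (adjoint_mat U * adjoint_mat (U ^\<^sub>m k)))"
    using U Pk by (simp add: adjoint_mult[of _ d d _ d] assoc_sq[of _ d])
  also have "\<dots> = 1\<^sub>m d" unfolding c using Suc .
  finally show ?case .
qed



lemma XZ_0b_index: "i < 2^n \<Longrightarrow> j < 2^n \<Longrightarrow> XZ n 0 b $$ (i,j) = (if i = j then chi n b j else 0)"
  by (simp add: XZ_index)

lemma entry_right_Z:
  assumes W: "W \<in> carrier_mat (2^n) (2^n)" and i: "i < 2^n" and j: "j < 2^n"
  shows "(W * XZ n 0 b) $$ (i,j) = W $$ (i,j) * chi n b j"
proof -
  have "(W * XZ n 0 b) $$ (i,j) = (\<Sum>l<2^n. W $$ (i,l) * XZ n 0 b $$ (l,j))"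
    using W i j by (intro mat_mult_entry) auto
  also have "\<dots> = (\<Sum>l<2^n. W $$ (i,l) * (if l = j then chi n b j else 0))"
    by (intro sum.cong refl) (simp add: XZ_0b_index j)
  also have "\<dots> = W $$ (i,j) * chi n b j" using j by (simp add: sum_collapse_right)
  finally show ?thesis .
qed

lemma entry_left_Z:
  assumes W: "W \<in> carrier_mat (2^n) (2^n)" and i: "i < 2^n" and j: "j < 2^n"
  shows "(XZ n 0 b * W) $$ (i,j) = chi n b i * W $$ (i,j)"
proof -
  have "(XZ n 0 b * W) $$ (i,j) = (\<Sum>l<2^n. XZ n 0 b $$ (i,l) * W $$ (l,j))"
    using W i j by (intro mat_mult_entry) auto
  also have "\<dots> = (\<Sum>l<2^n. (if l = i then chi n b i else 0) * W $$ (l,j))"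
    by (intro sum.cong refl) (auto simp: XZ_0b_index i)
  also have "\<dots> = chi n b i * W $$ (i,j)" using i by (simp add: sum_collapse_left)
  finally show ?thesis .
qed

lemma entry_right_X:
  assumes W: "W \<in> carrier_mat (2^n) (2^n)" and i: "i < 2^n" and j: "j < 2^n" and a: "a < 2^n"
  shows "(W * XZ n a 0) $$ (i,j) = W $$ (i, j XOR a)"
proof -
  have "(W * XZ n a 0) $$ (i,j) = (\<Sum>l<2^n. W $$ (i,l) * XZ n a 0 $$ (l,j))"
    using W i j by (intro mat_mult_entry) auto
  also have "\<dots> = (\<Sum>l<2^n. W $$ (i,l) * (if l = j XOR a then 1 else 0))"
    by (intro sum.cong refl) (simp add: XZ_index j)
  also have "\<dots> = W $$ (i, j XOR a)" using xor_lt_pow[OF j a] by (simp add: sum_collapse_right)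
  finally show ?thesis .
qed

lemma entry_left_X:
  assumes W: "W \<in> carrier_mat (2^n) (2^n)" and i: "i < 2^n" and j: "j < 2^n" and a: "a < 2^n"
  shows "(XZ n a 0 * W) $$ (i,j) = W $$ (i XOR a, j)"
proof -
  have "(XZ n a 0 * W) $$ (i,j) = (\<Sum>l<2^n. XZ n a 0 $$ (i,l) * W $$ (l,j))"
    using W i j by (intro mat_mult_entry) auto
  also have "\<dots> = (\<Sum>l<2^n. (if l = i XOR a then 1 else 0) * W $$ (l,j))"
    by (intro sum.cong refl) (auto simp: XZ_index' i)
  also have "\<dots> = W $$ (i XOR a, j)" using xor_lt_pow[OF i a] by (simp add: sum_collapse_left)
  finally show ?thesis .
qed

lemma sq1: "(x::complex) * x = 1 \<Longrightarrow> x = 1 \<or> x = -1"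
  by (metis mult_cancel_left2 square_eq_1_iff)

lemma central:
  assumes W: "W \<in> carrier_mat (2^n) (2^n)" and Wu: "W * adjoint_mat W = 1\<^sub>m (2^n)"
    and hX: "\<And>k. k < n \<Longrightarrow> \<exists>x. W * XZ n (2^k) 0 = x \<cdot>\<^sub>m (XZ n (2^k) 0 * W)"
    and hZ: "\<And>k. k < n \<Longrightarrow> \<exists>x. W * XZ n 0 (2^k) = x \<cdot>\<^sub>m (XZ n 0 (2^k) * W)"
  shows "\<exists>l c e. cmod l = 1 \<and> c < 2^n \<and> e < 2^n \<and> W = l \<cdot>\<^sub>m XZ n c e"
proof -
  have Wu': "adjoint_mat W * W = 1\<^sub>m (2^n)" using unitary_left[OF W Wu] .
  have "\<exists>i0<2^n. W $$ (i0, 0) \<noteq> 0"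
  proof (rule ccontr)
    assume "\<not> ?thesis"
    then have z: "\<And>l. l < 2^n \<Longrightarrow> W $$ (l,0) = 0" by blast
    have "(adjoint_mat W * W) $$ (0,0) = (\<Sum>l<2^n. adjoint_mat W $$ (0,l) * W $$ (l,0))"
      using W by (intro mat_mult_entry) auto
    also have "\<dots> = 0" using z by simp
    finally show False using Wu' by simp
  qed
  then obtain i0 where i0: "i0 < 2^n" "W $$ (i0,0) \<noteq> 0" by blast
  obtain xz where xz: "\<And>k. k < n \<Longrightarrow> W * XZ n 0 (2^k) = xz k \<cdot>\<^sub>m (XZ n 0 (2^k) * W)"
    using hZ by metis
  obtain xx where xx: "\<And>k. k < n \<Longrightarrow> W * XZ n (2^k) 0 = xx k \<cdot>\<^sub>m (XZ n (2^k) 0 * W)"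
    using hX by metis
  have Zrel: "W $$ (i,j) * sg (bit j k) = xz k * (sg (bit i k) * W $$ (i,j))"
    if "i < 2^n" "j < 2^n" "k < n" for i j k
  proof -
    have "(W * XZ n 0 (2^k)) $$ (i,j) = (xz k \<cdot>\<^sub>m (XZ n 0 (2^k) * W)) $$ (i,j)" using xz[OF that(3)] by simp
    also have "\<dots> = xz k * (XZ n 0 (2^k) * W) $$ (i,j)" using that W by simp
    finally have "W $$ (i,j) * chi n (2^k) j = xz k * (chi n (2^k) i * W $$ (i,j))"
      unfolding entry_right_Z[OF W that(1,2)] entry_left_Z[OF W that(1,2)] .
    then show ?thesis using that by (simp add: chi_comm[of n "2^k"] chi_pow)
  qed
  have Xrel: "W $$ (i, j XOR 2^k) = xx k * W $$ (i XOR 2^k, j)"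
    if "i < 2^n" "j < 2^n" "k < n" for i j k
  proof -
    have kk: "(2::nat)^k < 2^n" using that(3) by simp
    have "(W * XZ n (2^k) 0) $$ (i,j) = (xx k \<cdot>\<^sub>m (XZ n (2^k) 0 * W)) $$ (i,j)" using xx[OF that(3)] by simp
    also have "\<dots> = xx k * (XZ n (2^k) 0 * W) $$ (i,j)" using that W by simp
    finally show ?thesis
      unfolding entry_right_X[OF W that(1,2) kk] entry_left_X[OF W that(1,2) kk] .
  qed
  have supp: "W $$ (i,j) = 0" if "i < 2^n" "j < 2^n" "i \<noteq> j XOR i0" for i j
  proof (rule ccontr)
    assume nz: "W $$ (i,j) \<noteq> 0"
    have "bit i k = (bit j k \<noteq> bit i0 k)" if k: "k < n" for k
    proof -
      have "W $$ (i,j) * sg (bit j k) = W $$ (i,j) * (xz k * sg (bit i k))"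
        using Zrel[OF \<open>i < 2^n\<close> \<open>j < 2^n\<close> k] by (simp add: mult_ac)
      then have e1: "sg (bit j k) = xz k * sg (bit i k)" using nz by simp
      have "W $$ (i0,0) * 1 = W $$ (i0,0) * (xz k * sg (bit i0 k))"
        using Zrel[OF i0(1) _ k, of 0] by (simp add: mult_ac)
      then have e2: "1 = xz k * sg (bit i0 k)" using i0(2) by (simp only: mult_cancel_left) simp
      have "xz k = sg (bit i0 k)" using e2 by (metis mult.assoc mult.right_neutral sg_sq)
      then have "sg (bit j k) * sg (bit i k) = sg (bit i0 k)" using e1 by (metis mult.assoc mult.right_neutral sg_sq)
      then have "sg (bit j k \<noteq> bit i k) = sg (bit i0 k)" by (simp only: sg_xor)
      then show ?thesis by (auto simp: sg_def split: if_splits)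
    qed
    then have "i = j XOR i0" using bits_xor_eq[OF \<open>i < 2^n\<close> \<open>j < 2^n\<close> i0(1)] by blast
    with that show False by simp
  qed
  define w where "w j = W $$ (j XOR i0, j)" for j
  have wstep: "w (j XOR 2^k) = xx k * w j" if "j < 2^n" "k < n" for j k
  proof -
    have kk: "(2::nat)^k < 2^n" using that(2) by simp
    have a: "(j XOR 2^k) XOR i0 < 2^n" using xor_lt_pow[OF xor_lt_pow[OF that(1) kk] i0(1)] .
    have "((j XOR 2^k) XOR i0) XOR 2^k = j XOR i0" by (metis xor.assoc xor.commute xor_cancel)
    then show ?thesis using Xrel[OF a that] unfolding w_def by simp
  qed
  have w0: "w 0 \<noteq> 0" using i0 by (simp add: w_def)
  have pm: "xx k = 1 \<or> xx k = -1" if k: "k < n" for k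
  proof -
    have kk: "(2::nat)^k < 2^n" using k by simp
    have a: "w (2^k XOR 2^k) = xx k * w (2^k)" by (rule wstep[OF kk k])
    have b: "w (0 XOR 2^k) = xx k * w 0" by (rule wstep[OF _ k]) simp
    have "w 0 = xx k * w (2^k)" using a by simp
    also have "\<dots> = xx k * (xx k * w 0)" using b by simp
    finally have "(xx k * xx k) * w 0 = 1 * w 0" by (simp add: mult.assoc)
    then have "xx k * xx k = 1" using w0 by (metis mult_cancel_right)
    then show ?thesis by (rule sq1)
  qed
  define e where "e = of_bits n (\<lambda>k. xx k = -1)"
  have wrep: "w j = w 0 * chi n e j" if "j < 2^n" for j
    unfolding e_def by (rule char_rep[of n w xx, OF wstep pm that])
  have Wform: "W = w 0 \<cdot>\<^sub>m XZ n i0 e"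
  proof (rule eq_matI)
    fix i j assume "i < dim_row (w 0 \<cdot>\<^sub>m XZ n i0 e)" "j < dim_col (w 0 \<cdot>\<^sub>m XZ n i0 e)"
    then have i: "i < 2^n" and j: "j < 2^n" by auto
    show "W $$ (i,j) = (w 0 \<cdot>\<^sub>m XZ n i0 e) $$ (i,j)"
    proof (cases "i = j XOR i0")
      case True then show ?thesis using i j wrep[OF j] by (simp add: XZ_index w_def)
    next
      case False then show ?thesis using i j supp by (simp add: XZ_index)
    qed
  qed (use W in auto)
  have "1\<^sub>m (2^n) = (w 0 * cnj (w 0)) \<cdot>\<^sub>m (XZ n i0 e * adjoint_mat (XZ n i0 e))"
    using Wu unfolding Wform adjoint_smult by (simp add: smult_mult_smult[of _ "2^n"])
  also have "\<dots> = (w 0 * cnj (w 0)) \<cdot>\<^sub>m 1\<^sub>m (2^n)" using XZ_unitary[OF i0(1)] by simp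
  finally have "(1\<^sub>m (2^n) :: complex mat) $$ (0,0) = ((w 0 * cnj (w 0)) \<cdot>\<^sub>m 1\<^sub>m (2^n)) $$ (0,0)" by simp
  then have "w 0 * cnj (w 0) = 1" by simp
  then have "complex_of_real ((cmod (w 0))^2) = 1" using complex_norm_square[of "w 0"] by simp
  then have "(cmod (w 0))^2 = 1" by (simp only: of_real_eq_1_iff)
  then have "cmod (w 0) = 1" using power2_eq_1_iff[of "cmod (w 0)"] norm_ge_zero[of "w 0"] by auto
  moreover have "e < 2^n" unfolding e_def by (rule of_bits_lt)
  ultimately show ?thesis using Wform i0(1) by blast
qed



lemma log_facts:
  fixes n :: nat
  assumes n: "n \<ge> 1"
  defines "m \<equiv> nat \<lceil>log 2 (2 * real n)\<rceil>"
  shows "2 * n \<le> 2^m" "m \<ge> 1" "2^(m-1) < 2 * n" "int m = \<lceil>log 2 (2 * real n)\<rceil>"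
proof -
  have l1: "log 2 (2 * real n) \<ge> 1" using n by simp
  then have c1: "\<lceil>log 2 (2 * real n)\<rceil> \<ge> 1" by linarith
  then show im: "int m = \<lceil>log 2 (2 * real n)\<rceil>" unfolding m_def by simp
  show "m \<ge> 1" using c1 unfolding m_def by linarith
  show "2 * n \<le> 2^m"
  proof (rule ccontr)
    assume "\<not> 2 * n \<le> 2^m"
    then have "2^m < 2 * n" by simp
    then have "real m < log 2 (real (2 * n))" by (rule less_log2_of_power)
    moreover have "log 2 (2 * real n) \<le> real_of_int \<lceil>log 2 (2 * real n)\<rceil>" by (rule le_of_int_ceiling)
    ultimately show False using im by simp
  qed
  show "2^(m-1) < 2 * n"
  proof (rule ccontr)
    assume "\<not> 2^(m-1) < 2 * n"
    then have "2 * n \<le> 2^(m-1)" by simp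
    then have "log 2 (real (2 * n)) \<le> real (m-1)" by (intro log2_of_power_le) (use n in auto)
    then have "\<lceil>log 2 (2 * real n)\<rceil> \<le> int (m - 1)" by (simp add: ceiling_le_iff)
    with im \<open>m \<ge> 1\<close> show False by simp
  qed
qed

definition Nm :: "nat \<Rightarrow> complex mat \<Rightarrow> nat \<times> nat \<Rightarrow> nat \<times> nat" where
  "Nm n U = (\<lambda>v. xp (Phi n U v) v)"

lemma xp_ac4: "xp (xp a b) (xp c d) = xp (xp a c) (xp b d)"
  by (simp add: xp_def xor.assoc xor.left_commute)

lemma Nm_add: "U \<in> clifford_group n \<Longrightarrow> addf n (Nm n U)"
  using Phi_add[of U n] unfolding addf_def Nm_def by (auto simp: xp_ac4)

lemma Nm_pow: "U \<in> clifford_group n \<Longrightarrow> v \<in> Lab n \<Longrightarrow> (Nm n U ^^ (2^s)) v = xp ((Phi n U ^^ (2^s)) v) v"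
  unfolding Nm_def by (rule char2_pow[OF Phi_add])

lemma proj_nil:
  assumes U: "U \<in> clifford_group n" and pp: "proj_pauli n (U ^\<^sub>m (2^t))"
  shows "\<forall>v\<in>Lab n. (Nm n U ^^ (2^t)) v = (0,0)"
proof
  fix v assume v: "v \<in> Lab n"
  obtain c P where c: "cmod c = 1" and P: "P \<in> pauli_group n" and e: "U ^\<^sub>m (2^t) = c \<cdot>\<^sub>m P"
    using pp unfolding proj_pauli_def by blast
  have "c \<noteq> 0" using c by auto
  then have "(Phi n U ^^ (2^t)) v = v" using proj_fix[OF U e _ P v] by blast
  then show "(Nm n U ^^ (2^t)) v = (0,0)" using Nm_pow[OF U v] by simp
qed

lemma part1_core:
  assumes U: "U \<in> clifford_group n" and pp: "proj_pauli n (U ^\<^sub>m (2^t))" and m: "2 * n \<le> 2^m"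
  shows "proj_pauli n (U ^\<^sub>m (2^m))"
proof -
  let ?N = "Nm n U"
  have Na: "addf n ?N" by (rule Nm_add[OF U])
  have nil2n: "\<forall>v\<in>Lab n. (?N ^^ (2*n)) v = (0,0)"
    by (rule nilp_bound[OF Na proj_nil[OF U pp]])
  have fix_m: "(Phi n U ^^ (2^m)) v = v" if v: "v \<in> Lab n" for v
  proof -
    have eqm: "(2::nat)^m - 2*n + 2*n = 2^m" using m by simp
    have "(?N ^^ (2^m)) v = (?N ^^ (2^m - 2*n + 2*n)) v" by (simp only: eqm)
    also have "\<dots> = (?N ^^ (2^m - 2*n)) ((?N ^^ (2*n)) v)" by (simp only: funpow_add comp_apply)
    also have "\<dots> = (0,0)" using nil2n v addf_0[OF addf_pow[OF Na]] by simp
    finally show ?thesis using Nm_pow[OF U v] xp_eq0 by simp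
  qed
  let ?W = "U ^\<^sub>m (2^m)"
  have Uc: "U \<in> carrier_mat (2^n) (2^n)" by (rule clifford_carrier[OF U])
  have Wc: "?W \<in> carrier_mat (2^n) (2^n)" using Uc by simp
  have Wu: "?W * adjoint_mat ?W = 1\<^sub>m (2^n)" by (rule unitary_pow[OF Uc clifford_unit[OF U]])
  have Wu': "adjoint_mat ?W * ?W = 1\<^sub>m (2^n)" by (rule unitary_left[OF Wc Wu])
  have comm: "\<exists>x. ?W * XZp n v = x \<cdot>\<^sub>m (XZp n v * ?W)" if v: "v \<in> Lab n" for v
  proof -
    obtain x where x: "cj ?W (XZp n v) = x \<cdot>\<^sub>m XZp n v"
      using Phi_pow[OF U v, of "2^m"] fix_m[OF v] unfolding conjrel_def by auto
    have "?W * XZp n v = cj ?W (XZp n v) * ?W"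
      unfolding cj_def using Wc Wu' by (simp add: assoc_sq[of _ "2^n"] right_mult_one_mat[OF XZp_carrier])
    also have "\<dots> = x \<cdot>\<^sub>m (XZp n v * ?W)" unfolding x using Wc by (simp add: mult_smult_assoc_mat[of _ "2^n" "2^n" _ "2^n"])
    finally show ?thesis by blast
  qed
  have hX: "\<exists>x. ?W * XZ n (2^k) 0 = x \<cdot>\<^sub>m (XZ n (2^k) 0 * ?W)" if "k < n" for k
    using comm[of "(2^k, 0)"] that by (simp add: Lab_def XZp_def)
  have hZ: "\<exists>x. ?W * XZ n 0 (2^k) = x \<cdot>\<^sub>m (XZ n 0 (2^k) * ?W)" if "k < n" for k
    using comm[of "(0, 2^k)"] that by (simp add: Lab_def XZp_def)
  obtain l c e where l: "cmod l = 1" "c < 2^n" "e < 2^n" "?W = l \<cdot>\<^sub>m XZ n c e"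
    using central[OF Wc Wu hX hZ] by blast
  have "1 \<cdot>\<^sub>m XZ n c e \<in> pauli_group n" by (rule XZ_in_PG[OF l(2,3)]) simp
  then show ?thesis unfolding proj_pauli_def using l by auto
qed

theorem part1:
  "\<forall>n U. n \<ge> 1 \<longrightarrow> U \<in> clifford_group n \<longrightarrow>
            (\<exists>t. proj_pauli n (U ^\<^sub>m (2^t))) \<longrightarrow>
            int (proj_pauli_periodicity n U) \<le> \<lceil>log 2 (2 * real n)\<rceil>"
proof (intro allI impI)
  fix n U assume n: "n \<ge> (1::nat)" and U: "U \<in> clifford_group n" and ex: "\<exists>t. proj_pauli n (U ^\<^sub>m (2^t))"
  define m where "m = nat \<lceil>log 2 (2 * real n)\<rceil>"
  note lf = log_facts[OF n, folded m_def]
  obtain t where t: "proj_pauli n (U ^\<^sub>m (2^t))" using ex by blast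
  have "proj_pauli n (U ^\<^sub>m (2^m))" by (rule part1_core[OF U t lf(1)])
  then have "proj_pauli_periodicity n U \<le> m" unfolding proj_pauli_periodicity_def by (rule Least_le)
  then show "int (proj_pauli_periodicity n U) \<le> \<lceil>log 2 (2 * real n)\<rceil>" using lf(4) by simp
qed



definition piv :: "nat \<Rightarrow> nat \<Rightarrow> nat" where "piv n j = j XOR take_bit n (2 * j)"

lemma bit_piv: "bit (piv n j) k \<longleftrightarrow> (bit j k \<noteq> (k < n \<and> k \<noteq> 0 \<and> bit j (k - 1)))"
  by (auto simp: piv_def bit_simps)

lemma piv_lt: "j < 2^n \<Longrightarrow> piv n j < 2^n"
  unfolding piv_def by (rule xor_lt_pow) auto

lemma piv_xor: "piv n (j XOR k) = piv n j XOR piv n k"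
  by (rule bit_eqI) (auto simp: bit_piv bit_xor_iff)

lemma piv_0[simp]: "piv n 0 = 0" by (simp add: piv_def)

lemma piv_zero: "piv n x = 0 \<Longrightarrow> x < 2^n \<Longrightarrow> x = 0"
proof -
  assume p: "piv n x = 0" and x: "x < 2^n"
  have "\<not> bit x k" for k
  proof (induct k)
    case 0 then show ?case using bit_piv[of n x 0] p by simp
  next
    case (Suc k)
    have "\<not> bit (piv n x) (Suc k)" using p by simp
    then show ?case using Suc by (simp add: bit_piv)
  qed
  then show "x = 0" by (intro bit_eqI) auto
qed

lemma piv_inj: "inj_on (piv n) {..<2^n}"
proof (rule inj_onI)
  fix x y assume x: "x \<in> {..<2^n}" and y: "y \<in> {..<2^n}" and e: "piv n x = piv n y"
  have "piv n (x XOR y) = 0" using e by (simp add: piv_xor)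
  then have "x XOR y = 0" using piv_zero xor_lt_pow x y by auto
  then show "x = y" by (metis xor_cancel xor.left_neutral)
qed

lemma piv_bij: "piv n ` {..<2^n} = {..<2^n}"
  using endo_inj_surj[of "{..<2^n}" "piv n"] piv_inj piv_lt by auto

definition rho :: "nat \<Rightarrow> nat \<Rightarrow> nat" where "rho n = inv_into {..<2^n} (piv n)"

lemma rho_lt: "y < 2^n \<Longrightarrow> rho n y < 2^n"
  unfolding rho_def using piv_bij inv_into_into[of y "piv n" "{..<2^n}"] by auto
lemma piv_rho: "y < 2^n \<Longrightarrow> piv n (rho n y) = y"
  unfolding rho_def using piv_bij f_inv_into_f[of y "piv n" "{..<2^n}"] by auto
lemma rho_piv: "j < 2^n \<Longrightarrow> rho n (piv n j) = j"
  unfolding rho_def using piv_inj inv_into_f_f by auto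
lemma piv_eq_iff: "i < 2^n \<Longrightarrow> l < 2^n \<Longrightarrow> i = piv n l \<longleftrightarrow> l = rho n i"
  using piv_rho rho_piv by auto
lemma rho_xor: "y < 2^n \<Longrightarrow> z < 2^n \<Longrightarrow> rho n (y XOR z) = rho n y XOR rho n z"
proof -
  assume y: "y < 2^n" and z: "z < 2^n"
  have "piv n (rho n y XOR rho n z) = y XOR z" by (simp add: piv_xor piv_rho y z)
  then show ?thesis using rho_piv xor_lt_pow rho_lt y z by metis
qed
lemma rho_0[simp]: "rho n 0 = 0" using rho_piv[of 0 n] by simp

definition dd :: "nat \<Rightarrow> nat \<Rightarrow> complex" where "dd n y = (if bit y (n - 1) then \<i> else 1)"

lemma dd_cnj[simp]: "cnj (dd n y) * dd n y = 1" by (simp add: dd_def)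
lemma dd_cnj'[simp]: "dd n y * cnj (dd n y) = 1" by (simp add: dd_def)
lemma ii_mid[simp]: "\<i> * x * \<i> = - (x::complex)"
  by (subst mult.commute[of "\<i>" x]) (simp add: mult.assoc)
lemma dd_nz[simp]: "dd n y \<noteq> 0" by (simp add: dd_def)
lemma dd_Om: "dd n y \<in> Om" by (simp add: dd_def Om_def)

definition Um :: "nat \<Rightarrow> complex mat" where
  "Um n = mat (2^n) (2^n) (\<lambda>(i,j). if i = piv n j then dd n i else 0)"

lemma Um_carrier[simp]: "Um n \<in> carrier_mat (2^n) (2^n)" by (simp add: Um_def)
lemma Um_dim[simp]: "dim_row (Um n) = 2^n" "dim_col (Um n) = 2^n" by (simp_all add: Um_def)
lemma Um_index: "i < 2^n \<Longrightarrow> j < 2^n \<Longrightarrow> Um n $$ (i,j) = (if i = piv n j then dd n i else 0)"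
  by (simp add: Um_def)
lemma Um_index': "i < 2^n \<Longrightarrow> j < 2^n \<Longrightarrow> Um n $$ (i,j) = (if j = rho n i then dd n i else 0)"
  by (simp add: Um_def piv_eq_iff)

lemma Um_unitary: "Um n * adjoint_mat (Um n) = 1\<^sub>m (2^n)"
proof (rule eq_matI)
  fix i j assume "i < dim_row (1\<^sub>m (2^n) :: complex mat)" "j < dim_col (1\<^sub>m (2^n) :: complex mat)"
  then have i: "i < 2^n" and j: "j < 2^n" by auto
  have "(Um n * adjoint_mat (Um n)) $$ (i,j) = (\<Sum>l<2^n. Um n $$ (i,l) * adjoint_mat (Um n) $$ (l,j))"
    using i j by (intro mat_mult_entry) auto
  also have "\<dots> = (\<Sum>l<2^n. (if l = rho n i then dd n i else 0) * cnj (Um n $$ (j,l)))"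
    using i j by (intro sum.cong refl) (simp add: Um_index')
  also have "\<dots> = dd n i * cnj (Um n $$ (j, rho n i))" using rho_lt[OF i] by (simp add: sum_collapse_left)
  also have "\<dots> = (1\<^sub>m (2^n) :: complex mat) $$ (i,j)"
    using i j rho_lt[OF i] by (auto simp: Um_index' piv_eq_iff[symmetric] piv_rho mult.commute)
  finally show "(Um n * adjoint_mat (Um n)) $$ (i,j) = (1\<^sub>m (2^n) :: complex mat) $$ (i,j)" .
qed auto

lemma Um_XZ_left:
  assumes i: "i < 2^n" and j: "j < 2^n" and a: "a < 2^n"
  shows "(Um n * XZ n a b) $$ (i,j) = (if i = piv n (j XOR a) then dd n i * chi n b j else 0)"
proof -
  have "(Um n * XZ n a b) $$ (i,j) = (\<Sum>l<2^n. Um n $$ (i,l) * XZ n a b $$ (l,j))"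
    using i j by (intro mat_mult_entry) auto
  also have "\<dots> = (\<Sum>l<2^n. Um n $$ (i,l) * (if l = j XOR a then chi n b j else 0))"
    by (intro sum.cong refl) (simp add: XZ_index j)
  also have "\<dots> = Um n $$ (i, j XOR a) * chi n b j" using xor_lt_pow[OF j a] by (simp add: sum_collapse_right)
  finally show ?thesis using i xor_lt_pow[OF j a] by (simp add: Um_index)
qed

lemma XZ_Um_right:
  assumes i: "i < 2^n" and j: "j < 2^n"
  shows "(XZ n a c * Um n) $$ (i,j) = (if i = piv n j XOR a then chi n c (piv n j) * dd n (piv n j) else 0)"
proof -
  have "(XZ n a c * Um n) $$ (i,j) = (\<Sum>l<2^n. XZ n a c $$ (i,l) * Um n $$ (l,j))"
    using i j by (intro mat_mult_entry) auto
  also have "\<dots> = (\<Sum>l<2^n. XZ n a c $$ (i,l) * (if l = piv n j then dd n (piv n j) else 0))"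
    using j by (intro sum.cong refl) (auto simp: Um_index)
  also have "\<dots> = XZ n a c $$ (i, piv n j) * dd n (piv n j)" using piv_lt[OF j] by (simp add: sum_collapse_right)
  finally show ?thesis using i piv_lt[OF j] by (simp add: XZ_index)
qed

lemma dd_step:
  assumes k: "k < n"
  shows "dd n ((y XOR 2^k) XOR a') * cnj (dd n (y XOR 2^k)) =
         (if bit a' (n-1) \<and> k = n - 1 then -1 else 1) * (dd n (y XOR a') * cnj (dd n y))"
  by (cases "bit y (n-1)"; cases "bit a' (n-1)"; cases "k = n - 1") (auto simp: dd_def bit_simps)

lemma Um_conj:
  assumes a: "a < 2^n"
  shows "\<exists>x c. x \<in> Om \<and> c < 2^n \<and> Um n * XZ n a b = x \<cdot>\<^sub>m (XZ n (piv n a) c * Um n)"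
proof -
  let ?a = "piv n a"
  define G where "G y = dd n (y XOR ?a) * cnj (dd n y) * chi n b (rho n y)" for y
  define s where "s k = (if bit ?a (n-1) \<and> k = n - 1 then -1 else 1) * chi n b (rho n (2^k))" for k
  have step: "G (y XOR 2^k) = s k * G y" if y: "y < 2^n" and k: "k < n" for y k
  proof -
    have kk: "(2::nat)^k < 2^n" using k by simp
    have "chi n b (rho n (y XOR 2^k)) = chi n b (rho n y) * chi n b (rho n (2^k))"
      by (simp add: rho_xor[OF y kk] chi_xor_right)
    then show ?thesis unfolding G_def s_def dd_step[OF k] by (simp add: mult_ac)
  qed
  have pm: "s k = 1 \<or> s k = -1" for k
    unfolding s_def using chi_pm[of n b "rho n (2^k)"] by auto
  define c where "c = of_bits n (\<lambda>k. s k = -1)"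
  have Grep: "G y = G 0 * chi n c y" if "y < 2^n" for y
    unfolding c_def by (rule char_rep[OF step pm that])
  have G0: "G 0 = dd n ?a" by (simp add: G_def dd_def)
  have "Um n * XZ n a b = dd n ?a \<cdot>\<^sub>m (XZ n ?a c * Um n)"
  proof (rule eq_matI)
    fix i j assume "i < dim_row (dd n ?a \<cdot>\<^sub>m (XZ n ?a c * Um n))" "j < dim_col (dd n ?a \<cdot>\<^sub>m (XZ n ?a c * Um n))"
    then have i: "i < 2^n" and j: "j < 2^n" by auto
    have pj: "piv n j < 2^n" using piv_lt[OF j] .
    have eqp: "piv n (j XOR a) = piv n j XOR ?a" by (simp add: piv_xor)
    have key: "dd n (piv n j XOR ?a) * chi n b j = dd n ?a * (chi n c (piv n j) * dd n (piv n j))"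
    proof -
      have "G (piv n j) = dd n ?a * chi n c (piv n j)" using Grep[OF pj] G0 by simp
      then have "dd n (piv n j XOR ?a) * cnj (dd n (piv n j)) * chi n b j = dd n ?a * chi n c (piv n j)"
        unfolding G_def rho_piv[OF j] .
      then have "dd n (piv n j XOR ?a) * cnj (dd n (piv n j)) * chi n b j * dd n (piv n j) =
                 dd n ?a * chi n c (piv n j) * dd n (piv n j)" by simp
      moreover have "dd n (piv n j XOR ?a) * cnj (dd n (piv n j)) * chi n b j * dd n (piv n j) =
                 dd n (piv n j XOR ?a) * chi n b j"
        by (cases "bit (piv n j) (n-1)") (simp_all add: dd_def)
      ultimately show ?thesis by (simp add: mult_ac)
    qed
    show "(Um n * XZ n a b) $$ (i,j) = (dd n ?a \<cdot>\<^sub>m (XZ n ?a c * Um n)) $$ (i,j)"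
      using i j by (simp add: Um_XZ_left[OF i j a] XZ_Um_right[OF i j] eqp key)
  qed auto
  moreover have "c < 2^n" unfolding c_def by (rule of_bits_lt)
  ultimately show ?thesis using dd_Om by blast
qed

lemma Um_clifford: "Um n \<in> clifford_group n"
  unfolding clifford_group_def unitary_mat_def
proof (intro CollectI conjI ballI Um_carrier Um_unitary)
  fix P assume "P \<in> pauli_group n"
  then obtain w a b where w: "w \<in> Om" and a: "a < 2^n" and b: "b < 2^n" and P: "P = w \<cdot>\<^sub>m XZ n a b"
    unfolding pauli_group_eq PG_def by blast
  obtain x c where x: "x \<in> Om" "c < 2^n" "Um n * XZ n a b = x \<cdot>\<^sub>m (XZ n (piv n a) c * Um n)"
    using Um_conj[OF a] by blast
  have "Um n * P * adjoint_mat (Um n) = w \<cdot>\<^sub>m (Um n * XZ n a b * adjoint_mat (Um n))"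
    unfolding P by (simp add: mult_smult_distrib[of _ "2^n" "2^n" _ "2^n"] mult_smult_assoc_mat[of _ "2^n" "2^n" _ "2^n"])
  also have "\<dots> = (w * x) \<cdot>\<^sub>m (XZ n (piv n a) c * (Um n * adjoint_mat (Um n)))"
    unfolding x(3) by (simp add: mult_smult_assoc_mat[of _ "2^n" "2^n" _ "2^n"] assoc_sq[of _ "2^n"] smult_smult_mat)
  also have "\<dots> = (w * x) \<cdot>\<^sub>m XZ n (piv n a) c" by (simp add: Um_unitary)
  finally show "Um n * P * adjoint_mat (Um n) \<in> pauli_group n"
    using XZ_in_PG[OF piv_lt[OF a] x(2) Om_mult[OF w x(1)]] by simp
qed



lemma piv_pow_lt: "j < 2^n \<Longrightarrow> (piv n ^^ k) j < 2^n"
  by (induct k) (auto simp: piv_lt)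

lemma piv_pow_xor: "(piv n ^^ k) (j XOR a) = (piv n ^^ k) j XOR (piv n ^^ k) a"
  by (induct k) (auto simp: piv_xor)

lemma piv_pow_0[simp]: "(piv n ^^ k) 0 = 0" by (induct k) auto

definition ee :: "nat \<Rightarrow> nat \<Rightarrow> nat \<Rightarrow> complex" where
  "ee n k j = (\<Prod>l<k. dd n ((piv n ^^ Suc l) j))"

lemma Um_pow:
  assumes i: "i < 2^n" and j: "j < 2^n"
  shows "(Um n ^\<^sub>m k) $$ (i,j) = (if i = (piv n ^^ k) j then ee n k j else 0)"
  using i j
proof (induct k arbitrary: i j)
  case 0 then show ?case by (simp add: ee_def)
next
  case (Suc k)
  have pj: "piv n j < 2^n" using piv_lt[OF Suc.prems(2)] .
  have "(Um n ^\<^sub>m Suc k) $$ (i,j) = (\<Sum>l<2^n. (Um n ^\<^sub>m k) $$ (i,l) * Um n $$ (l,j))"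
    using Suc.prems by (simp only: pow_mat.simps) (intro mat_mult_entry, auto)
  also have "\<dots> = (\<Sum>l<2^n. (Um n ^\<^sub>m k) $$ (i,l) * (if l = piv n j then dd n (piv n j) else 0))"
    using Suc.prems by (intro sum.cong refl) (auto simp: Um_index)
  also have "\<dots> = (Um n ^\<^sub>m k) $$ (i, piv n j) * dd n (piv n j)" using pj by (simp add: sum_collapse_right)
  also have "\<dots> = (if i = (piv n ^^ k) (piv n j) then ee n k (piv n j) * dd n (piv n j) else 0)"
    using Suc.hyps[OF Suc.prems(1) pj] by simp
  also have "ee n k (piv n j) * dd n (piv n j) = ee n (Suc k) j"
    unfolding ee_def prod.lessThan_Suc_shift by (simp add: funpow_Suc_right del: funpow.simps)
  also have "(piv n ^^ k) (piv n j) = (piv n ^^ Suc k) j" by (simp add: funpow_Suc_right del: funpow.simps)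
  finally show ?case .
qed

lemma piv_pow2: "(piv n ^^ (2^s)) j = j XOR take_bit n (push_bit (2^s) j)"
proof (induct s arbitrary: j)
  case 0 then show ?case by (simp add: piv_def push_bit_eq_mult mult.commute)
next
  case (Suc s)
  have "(piv n ^^ (2^Suc s)) j = (piv n ^^ (2^s)) ((piv n ^^ (2^s)) j)"
    by (simp only: power_Suc mult_2 funpow_add comp_apply)
  also have "\<dots> = j XOR take_bit n (push_bit (2^Suc s) j)"
    unfolding Suc by (rule bit_eqI) (auto simp: bit_simps mult_2 diff_diff_left)
  finally show ?case .
qed

lemma piv_per: "n \<le> 2^s \<Longrightarrow> (piv n ^^ (2^s)) j = j"
  unfolding piv_pow2 by (rule bit_eqI) (auto simp: bit_simps)

lemma ee_add: "ee n (a + b) j = ee n a j * ee n b ((piv n ^^ a) j)"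
proof (induct b)
  case 0 then show ?case by (simp add: ee_def)
next
  case (Suc b)
  have "ee n (a + Suc b) j = ee n (a + b) j * dd n ((piv n ^^ Suc (a + b)) j)"
    by (simp add: ee_def)
  also have "(piv n ^^ Suc (a + b)) j = (piv n ^^ Suc b) ((piv n ^^ a) j)"
  proof -
    have "piv n ^^ Suc (a + b) = (piv n ^^ Suc b) \<circ> (piv n ^^ a)"
      by (metis add_Suc add.commute funpow_add)
    then show ?thesis by simp
  qed
  finally show ?case using Suc by (simp add: ee_def mult.assoc)
qed

lemma dd_sq: "dd n y * dd n y = sg (bit y (n - 1))" by (simp add: dd_def sg_def)

lemma prod_sg_pm: "(\<Prod>l<(K::nat). sg (f l)) = 1 \<or> (\<Prod>l<K. sg (f l)) = -1"
  by (induct K) (auto simp: sg_def)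

lemma Um_pow_pauli:
  assumes s: "n \<le> 2^s"
  shows "Um n ^\<^sub>m (2^Suc s) \<in> pauli_group n"
proof -
  let ?K = "(2::nat)^s"
  define g where "g j = (\<Prod>l<?K. sg (bit ((piv n ^^ Suc l) j) (n - 1)))" for j
  have eeg: "ee n (2^Suc s) j = g j" for j
  proof -
    have "ee n (2^Suc s) j = ee n ?K j * ee n ?K j"
      using ee_add[of n ?K ?K j] piv_per[OF s] by (simp add: mult_2)
    also have "\<dots> = g j" unfolding ee_def g_def prod.distrib[symmetric] dd_sq ..
    finally show ?thesis .
  qed
  have gx: "g (j XOR a) = g j * g a" for j a
    unfolding g_def prod.distrib[symmetric] by (intro prod.cong refl) (auto simp: piv_pow_xor piv_xor bit_xor_iff sg_def)
  have g0: "g 0 = 1" by (simp add: g_def)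
  have step: "g (y XOR 2^k) = g (2^k) * g y" if "y < 2^n" "k < n" for y k
    by (simp add: gx mult.commute)
  have pm: "g (2^k) = 1 \<or> g (2^k) = -1" for k unfolding g_def by (rule prod_sg_pm)
  define c where "c = of_bits n (\<lambda>k. g (2^k) = -1)"
  have grep: "g y = chi n c y" if "y < 2^n" for y
    using char_rep[of n g "\<lambda>k. g (2^k)", OF step pm that] g0 unfolding c_def by simp
  have "Um n ^\<^sub>m (2^Suc s) = 1 \<cdot>\<^sub>m XZ n 0 c"
  proof (rule eq_matI)
    fix i j assume "i < dim_row (1 \<cdot>\<^sub>m XZ n 0 c)" "j < dim_col (1 \<cdot>\<^sub>m XZ n 0 c)"
    then have i: "i < 2^n" and j: "j < 2^n" by auto
    have per: "(piv n ^^ (2^Suc s)) j = j" using piv_per[of n "Suc s"] s by simp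
    show "(Um n ^\<^sub>m (2^Suc s)) $$ (i,j) = (1 \<cdot>\<^sub>m XZ n 0 c) $$ (i,j)"
      unfolding Um_pow[OF i j] per eeg grep[OF j] using i j by (simp add: XZ_index)
  qed auto
  moreover have "c < 2^n" unfolding c_def by (rule of_bits_lt)
  ultimately show ?thesis using XZ_in_PG[of 0 n c 1] by simp
qed



lemma comm_of_conj:
  assumes W: "W \<in> carrier_mat d d" "adjoint_mat W * W = 1\<^sub>m d" and A: "A \<in> carrier_mat d d"
    and B: "B \<in> carrier_mat d d" and e: "cj W A = x \<cdot>\<^sub>m B"
  shows "W * A = x \<cdot>\<^sub>m (B * W)"
proof -
  have "W * A = cj W A * W"
    unfolding cj_def using W A by (simp add: assoc_sq[of _ d] right_mult_one_mat[OF A])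
  also have "\<dots> = x \<cdot>\<^sub>m (B * W)" unfolding e using W B by (simp add: mult_smult_assoc_mat[of _ d d _ d])
  finally show ?thesis .
qed

lemma piv_fixed:
  assumes a: "a < 2^n" and p: "piv n a = a"
  shows "a = 0 \<or> a = 2^(n-1)"
proof -
  have low: "\<not> bit a k" if "Suc k < n" for k
    using arg_cong[OF p, of "\<lambda>x. bit x (Suc k)"] that by (auto simp: bit_piv)
  have high: "\<not> bit a k" if "k \<ge> n" for k using bit_lt_pow[OF a, of k] that by auto
  show ?thesis
  proof (cases "bit a (n-1)")
    case True
    have "a = 2^(n-1)"
    proof (rule bit_eqI)
      fix k show "bit a k = bit ((2::nat)^(n-1)) k"
      proof (cases "k = n - 1")
        case True then show ?thesis using \<open>bit a (n-1)\<close> by (simp add: bit_exp_iff)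
      next
        case False
        then have "Suc k < n \<or> k \<ge> n" by arith
        then show ?thesis using low high False by (auto simp: bit_exp_iff)
      qed
    qed
    then show ?thesis by simp
  next
    case False
    have "a = 0"
    proof (rule bit_eqI)
      fix k show "bit a k = bit (0::nat) k"
      proof (cases "k = n - 1")
        case True then show ?thesis using \<open>\<not> bit a (n-1)\<close> by simp
      next
        case F: False
        then have "Suc k < n \<or> k \<ge> n" by arith
        then show ?thesis using low high by auto
      qed
    qed
    then show ?thesis by simp
  qed
qed

lemma piv_pow2k: "Suc k < n \<Longrightarrow> piv n (2^k) = 2^k XOR 2^(Suc k)"
  by (rule bit_eqI) (auto simp: bit_piv bit_xor_iff bit_exp_iff bit_double_iff)

lemma Um_K1:
  assumes n: "n \<ge> 1"
  shows "card (Kn n (Nm n (Um n)) 1) \<le> 2"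
proof -
  have U: "Um n \<in> clifford_group n" by (rule Um_clifford)
  have sub: "Kn n (Nm n (Um n)) 1 \<subseteq> {(0,0), (0,1)}"
  proof
    fix v assume v: "v \<in> Kn n (Nm n (Um n)) 1"
    then have vL: "v \<in> Lab n" and N0: "xp (Phi n (Um n) v) v = (0,0)" by (auto simp: Kn_def Nm_def)
    then have "Phi n (Um n) v = v" by (simp add: xp_eq0)
    then have "conjrel n (Um n) v v" using Phi_props(2)[OF U vL] by simp
    then obtain x where x: "x \<noteq> 0" "cj (Um n) (XZp n v) = x \<cdot>\<^sub>m XZp n v" unfolding conjrel_def by blast
    obtain a b where ab: "v = (a,b)" by fastforce
    have a: "a < 2^n" and b: "b < 2^n" using vL ab by (auto simp: Lab_def)
    have cm: "Um n * XZ n a b = x \<cdot>\<^sub>m (XZ n a b * Um n)"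
      using comm_of_conj[OF Um_carrier clifford_unit'[OF U] XZp_carrier XZp_carrier x(2)] ab by (simp add: XZp_def)
    have E: "(if i = piv n (j XOR a) then dd n i * chi n b j else 0) =
             x * (if i = piv n j XOR a then chi n b (piv n j) * dd n (piv n j) else 0)"
      if i: "i < 2^n" and j: "j < 2^n" for i j
    proof -
      have "(Um n * XZ n a b) $$ (i,j) = x * (XZ n a b * Um n) $$ (i,j)" using cm i j by simp
      then show ?thesis unfolding Um_XZ_left[OF i j a] XZ_Um_right[OF i j] .
    qed
    have pa: "piv n a = a"
    proof (rule ccontr)
      assume "piv n a \<noteq> a"
      then show False using E[OF piv_lt[OF a], of 0] by simp
    qed
    have ca: "a = 0 \<or> a = 2^(n-1)" by (rule piv_fixed[OF a pa])
    show "v \<in> {(0,0), (0,1)}"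
    proof (cases "a = 0")
      case True
      have Ej: "chi n b j = x * chi n b (piv n j)" if j: "j < 2^n" for j
      proof -
        have "dd n (piv n j) * chi n b j = x * (chi n b (piv n j) * dd n (piv n j))"
          using E[OF piv_lt[OF j] j] True by simp
        then have "dd n (piv n j) * chi n b j = dd n (piv n j) * (x * chi n b (piv n j))" by (simp add: mult_ac)
        then show ?thesis by simp
      qed
      have x1: "x = 1" using Ej[of 0] by simp
      have hb: "\<not> bit b (Suc k)" if k: "Suc k < n" for k
      proof -
        have kk: "(2::nat)^k < 2^n" using k by simp
        have kk': "(2::nat)^Suc k < 2^n" by (rule power_strict_increasing) (use k in auto)
        have "chi n b (2^k) = chi n b (2^k) * chi n b (2^Suc k)"
          using Ej[OF kk] x1 piv_pow2k[OF k] by (simp add: chi_xor_right)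
        then have "chi n b (2^Suc k) = 1" by simp
        then show ?thesis using chi_pow[OF k, of b] by (simp add: sg_def split: if_splits)
      qed
      have "b = 0 \<or> b = 1"
      proof (cases "bit b 0")
        case True
        have "b = 1"
        proof (rule bit_eqI)
          fix k show "bit b k = bit (1::nat) k"
          proof (cases k)
            case 0 then show ?thesis using True by (simp add: bit_iff_odd)
          next
            case (Suc k') then show ?thesis using hb[of k'] bit_lt_pow[OF b, of k] by (auto simp: bit_1_iff)
          qed
        qed
        then show ?thesis by simp
      next
        case False
        have "b = 0"
        proof (rule bit_eqI)
          fix k show "bit b k = bit (0::nat) k"
            using False hb bit_lt_pow[OF b, of k] by (cases k) auto
        qed
        then show ?thesis by simp
      qed
      then show ?thesis using ab True by auto
    next
      case False
      with ca have a2: "a = 2^(n-1)" by simp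
      have bt: "bit a (n-1)" using a2 by (simp add: bit_exp_iff)
      have "dd n a = x" using E[OF a, of 0] pa by (simp add: dd_def)
      then have xi: "x = \<i>" using bt by (simp add: dd_def)
      have "chi n b a = x * (chi n b a * dd n a)" using E[of 0 a] a pa by (simp add: dd_def)
      then have "chi n b a = - chi n b a" using xi bt by (simp add: dd_def mult_ac)
      then show ?thesis by simp
    qed
  qed
  have "card (Kn n (Nm n (Um n)) 1) \<le> card {(0::nat,0::nat), (0,1)}" by (rule card_mono[OF _ sub]) simp
  also have "\<dots> = 2" by simp
  finally show ?thesis .
qed

lemma Um_not_proj:
  assumes n: "n \<ge> 1" and pp: "proj_pauli n (Um n ^\<^sub>m (2^t))"
  shows "2 * n \<le> 2^t"
proof -
  let ?N = "Nm n (Um n)"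
  have U: "Um n \<in> clifford_group n" by (rule Um_clifford)
  have "Kn n ?N (2^t) = Lab n" using proj_nil[OF U pp] by (auto simp: Kn_def)
  then have "card (Lab n) \<le> 2^(2^t)" using Kn_card_bound[OF Nm_add[OF U] Um_K1[OF n]] by metis
  then have "(2::nat)^(2*n) \<le> 2^(2^t)" by (simp add: Lab_card)
  then show ?thesis by simp
qed

theorem part2:
  "\<forall>n. n > 1 \<longrightarrow>
            (\<exists>U \<in> clifford_group n.
               proj_pauli_periodicity n U = nat \<lceil>log 2 (2 * real n)\<rceil>
             \<and> U ^\<^sub>m (2 ^ nat \<lceil>log 2 (2 * real n)\<rceil>) \<in> pauli_group n
             \<and> pauli_periodicity n U = nat \<lceil>log 2 (2 * real n)\<rceil>)"
proof (intro allI impI)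
  fix n :: nat assume n1: "n > 1"
  then have n: "n \<ge> 1" by simp
  define m where "m = nat \<lceil>log 2 (2 * real n)\<rceil>"
  note lf = log_facts[OF n, folded m_def]
  have ms: "m = Suc (m - 1)" using lf(2) by simp
  have "(2::nat)^m = 2 * 2^(m-1)" by (subst ms) simp
  then have s: "n \<le> 2^(m-1)" using lf(1) by linarith
  have inP: "Um n ^\<^sub>m (2^m) \<in> pauli_group n" using Um_pow_pauli[OF s] ms by metis
  have projm: "proj_pauli n (Um n ^\<^sub>m (2^m))"
    unfolding proj_pauli_def using inP by (intro exI[of _ 1] exI[of _ "Um n ^\<^sub>m (2^m)"]) simp
  have low: "m \<le> t" if "proj_pauli n (Um n ^\<^sub>m (2^t))" for t
  proof (rule ccontr)
    assume "\<not> m \<le> t"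
    then have "t \<le> m - 1" by simp
    then have "(2::nat)^t \<le> 2^(m-1)" by simp
    with Um_not_proj[OF n that] lf(3) show False by simp
  qed
  have pp: "proj_pauli_periodicity n (Um n) = m"
    unfolding proj_pauli_periodicity_def
  proof (rule Least_equality)
    show "proj_pauli n (Um n ^\<^sub>m (2^m))" by (rule projm)
  next
    fix t assume "proj_pauli n (Um n ^\<^sub>m (2^t))" then show "m \<le> t" by (rule low)
  qed
  have p: "pauli_periodicity n (Um n) = m"
    unfolding pauli_periodicity_def
  proof (rule Least_equality)
    show "Um n ^\<^sub>m (2^m) \<in> pauli_group n" by (rule inP)
  next
    fix t assume "Um n ^\<^sub>m (2^t) \<in> pauli_group n"
    then have "proj_pauli n (Um n ^\<^sub>m (2^t))"
      unfolding proj_pauli_def by (intro exI[of _ 1] exI[of _ "Um n ^\<^sub>m (2^t)"]) simp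
    then show "m \<le> t" by (rule low)
  qed
  show "\<exists>U \<in> clifford_group n.
               proj_pauli_periodicity n U = nat \<lceil>log 2 (2 * real n)\<rceil>
             \<and> U ^\<^sub>m (2 ^ nat \<lceil>log 2 (2 * real n)\<rceil>) \<in> pauli_group n
             \<and> pauli_periodicity n U = nat \<lceil>log 2 (2 * real n)\<rceil>"
    using Um_clifford pp p inP unfolding m_def by blast
qed


theorem mainTheorem7:
  shows "(\<forall>n U. n \<ge> 1 \<longrightarrow> U \<in> clifford_group n \<longrightarrow>
            (\<exists>t. proj_pauli n (U ^\<^sub>m (2^t))) \<longrightarrow>
            int (proj_pauli_periodicity n U) \<le> \<lceil>log 2 (2 * real n)\<rceil>)
       \<and> (\<forall>n. n > 1 \<longrightarrow>
            (\<exists>U \<in> clifford_group n.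
               proj_pauli_periodicity n U = nat \<lceil>log 2 (2 * real n)\<rceil>
             \<and> U ^\<^sub>m (2 ^ nat \<lceil>log 2 (2 * real n)\<rceil>) \<in> pauli_group n
             \<and> pauli_periodicity n U = nat \<lceil>log 2 (2 * real n)\<rceil>))"
  using part1 part2 by blast

end
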